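(* Let $\phi_1,\dots,\phi_m$ be eigenfunctions and $\psi_1,\dots,\psi_m$ adjoint eigenfunctions of the dmKP hierarchy, and let $\partial_\alpha$ be the squared eigenfunction symmetry flow $\partial_{\alpha}L=[\sum_{i=1}^{m}\phi_{i}\Delta^{-1}\varGamma\psi_{i}\Delta,L]$, acting on the dressing operator by $\partial_{\alpha}Z=\sum_{i=1}^{m}\phi_{i}\Delta^{-1}\varGamma\psi_{i}\Delta Z$. Then the wave function and adjoint wave function satisfy \[ \partial_{\alpha}w(n,t,\lambda)=\sum_{i=1}^{m}\phi_{i}\,\hat S\big(\Delta w(n,t,\lambda),\varGamma\psi_{i}\big),\qquad \partial_{\alpha}w^{*}(n,t,\lambda)=-\sum_{i=1}^{m}\psi_{i}\,S\big(\phi_{i},\Delta w^{*}(n,t,\lambda)\big). \]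
   Context: $\varGamma g(n)=g(n+1)$, $\Delta=\varGamma-I$, $\Delta^*=\varGamma^{-1}-I$; pseudo-difference operators $\sum_{i\le m}a_i\Delta^i$ are multiplied by $\Delta^{k}\circ g=\sum_{i\ge0}\binom ki (\Delta^{i}g)(n+k-i)\Delta^{k-i}$, with adjoint $(a\Delta^k)^*=(\Delta^* )^k a$; $(A)_{\ge1}$ is the part of positive $\Delta$-order; $\operatorname{res}_\Delta$ is the coefficient of $\Delta^{-1}$. The dmKP hierarchy is $\partial_{t_i}L=[(L^i)_{\ge1},L]$, $L=Z\Delta Z^{-1}=\Delta+u_0+u_1\Delta^{-1}+\cdots$, $Z=z_0+z_1\Delta^{-1}+\cdots$. With $\xi(t,\lambda)=\sum_k t_k\lambda^k$, the wave function is $w(n,t,\lambda)=Z(n)(1+\lambda)^ne^{\xi(t,\lambda)}$ and the adjoint wave function $w^*(n,t,\lambda)=(Z^{-1}(n-1)\Delta^{-1})^*(1+\lambda)^{-n}e^{-\xi(t,\lambda)}$. Eigenfunctions satisfy $\phi_{t_i}=(L^i)_{\ge1}(\phi)$; adjoint eigenfunctions satisfy $\psi_{t_i}=-(\Delta^{-1}(L^i)^*_{\ge1}\Delta)(\psi)$. The squared eigenfunction potential $S(\phi,\Delta\psi)$ satisfies $\Delta S(\phi,\Delta\psi)=\phi\,(\Delta\psi)$ and $\partial_{t_i}S(\phi,\Delta\psi)=\operatorname{res}_{\Delta}(\varGamma\Delta^{-1}(\Delta\psi)(L^{i})_{\geq1}\phi\Delta^{-1})$; and $\hat S(\Delta\phi,\varGamma\psi)=\phi\psi-S(\phi,\Delta\psi)$,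 so that $\Delta\hat S(\Delta\phi,\varGamma\psi)=(\Delta\phi)\varGamma\psi$. *)

theory Defs
  imports "HOL-Computational_Algebra.Formal_Laurent_Series"
begin

text \<open>
A "function of (n,t,alpha)" is modelled as a map int => 'a, where the
commutative ring 'a carries the dependence on the times: the derivations
dt k (k >= 1) play the role of the partial derivatives in t_k and da the role of
the symmetry flow partial_alpha.  Pseudo-difference operators
sum_{j <= m} a_j Delta^j are maps P :: int => int => 'r with P j = a_j
(coefficient of Delta^j), vanishing for large j.
\<close>

type_synonym 'r fn = "int \<Rightarrow> 'r"
type_synonym 'r pdo = "int \<Rightarrow> int \<Rightarrow> 'r"

definition fsum :: "('b \<Rightarrow> 'r::comm_monoid_add) \<Rightarrow> 'r" where
  "fsum f = sum f {x. f x \<noteq> 0}"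

text \<open>Integer binomial coefficient binom(k,i), k :: int, i :: nat.\<close>
definition ibinom :: "int \<Rightarrow> nat \<Rightarrow> int" where
  "ibinom k i = (if 0 \<le> k then int (nat k choose i)
                 else (-1) ^ i * int ((nat (- k) + i - 1) choose i))"

text \<open>Shift Gamma^k, difference Delta^i, adjoint difference (Delta^*)^i on functions.\<close>
definition shf :: "int \<Rightarrow> 'r fn \<Rightarrow> 'r fn" where
  "shf k f = (\<lambda>n. f (n + k))"

primrec fdiff :: "nat \<Rightarrow> ('r::ab_group_add) fn \<Rightarrow> 'r fn" where
  "fdiff 0 f = f"
| "fdiff (Suc i) f = (\<lambda>n. fdiff i f (n + 1) - fdiff i f n)"

primrec fdiffs :: "nat \<Rightarrow> ('r::ab_group_add) fn \<Rightarrow> 'r fn" where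
  "fdiffs 0 f = f"
| "fdiffs (Suc i) f = (\<lambda>n. fdiffs i f (n - 1) - fdiffs i f n)"

definition pdo_wf :: "('r::zero) pdo \<Rightarrow> bool" where
  "pdo_wf P \<longleftrightarrow> (\<exists>m. \<forall>j>m. \<forall>n. P j n = 0)"

text \<open>Product, via Delta^k o g = sum_{i>=0} binom(k,i) (Delta^i g)(n+k-i) Delta^(k-i).\<close>
definition pdo_mult :: "('r::comm_ring_1) pdo \<Rightarrow> 'r pdo \<Rightarrow> 'r pdo" where
  "pdo_mult A B = (\<lambda>r n. fsum (\<lambda>(k::int, i::nat).
      A k n * of_int (ibinom k i) * fdiff i (B (r - k + int i)) (n + k - int i)))"

definition pdo_one :: "('r::{zero,one}) pdo" where
  "pdo_one = (\<lambda>j n. if j = 0 then 1 else 0)"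

definition pdo_Delta :: "('r::{zero,one}) pdo" where
  "pdo_Delta = (\<lambda>j n. if j = 1 then 1 else 0)"

definition pdo_Dinv :: "('r::{zero,one}) pdo" where
  "pdo_Dinv = (\<lambda>j n. if j = -1 then 1 else 0)"

text \<open>Gamma = I + Delta.\<close>
definition pdo_Gamma :: "('r::{zero,one}) pdo" where
  "pdo_Gamma = (\<lambda>j n. if j = 0 \<or> j = 1 then 1 else 0)"

definition pdo_fn :: "('r::zero) fn \<Rightarrow> 'r pdo" where
  "pdo_fn f = (\<lambda>j n. if j = 0 then f n else 0)"

definition pdo_pow :: "('r::comm_ring_1) pdo \<Rightarrow> nat \<Rightarrow> 'r pdo" where
  "pdo_pow P k = (pdo_mult P ^^ k) pdo_one"

definition pdo_neg :: "('r::ab_group_add) pdo \<Rightarrow> 'r pdo" where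
  "pdo_neg P = (\<lambda>j n. - P j n)"

definition pdo_pos :: "('r::zero) pdo \<Rightarrow> 'r pdo" where
  "pdo_pos P = (\<lambda>j n. if 1 \<le> j then P j n else 0)"

definition pdo_nonpos :: "('r::zero) pdo \<Rightarrow> 'r pdo" where
  "pdo_nonpos P = (\<lambda>j n. if j \<le> 0 then P j n else 0)"

definition pdo_res :: "'r pdo \<Rightarrow> 'r fn" where
  "pdo_res P = P (-1)"

definition pdo_map :: "('r \<Rightarrow> 's) \<Rightarrow> 'r pdo \<Rightarrow> 's pdo" where
  "pdo_map h P = (\<lambda>j n. h (P j n))"

definition pdo_apply :: "('r::comm_ring_1) pdo \<Rightarrow> 'r fn \<Rightarrow> 'r fn" where
  "pdo_apply P f = (\<lambda>n. fsum (\<lambda>j::nat. P (int j) n * fdiff j f n))"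

text \<open>For B = sum_{j>=1} b_j Delta^j, the function (Delta^{-1} B^* Delta)(psi), where
  B^* = sum_j (Delta^*)^j b_j.  Since Delta^* = -Gamma^{-1} Delta, one has
  Delta^{-1} (Delta^*)^j = - Gamma^{-1} (Delta^*)^(j-1) for j >= 1.\<close>
definition adj_conj_apply :: "('r::comm_ring_1) pdo \<Rightarrow> 'r fn \<Rightarrow> 'r fn" where
  "adj_conj_apply B psi = (\<lambda>n. - fsum (\<lambda>j::nat. if 1 \<le> j then
        fdiffs (j - 1) (\<lambda>m. B (int j) m * fdiff 1 psi m) (n - 1) else 0))"

definition is_derivation :: "('a::comm_ring_1 \<Rightarrow> 'a) \<Rightarrow> bool" where
  "is_derivation D \<longleftrightarrow> (\<forall>a b. D (a + b) = D a + D b) \<and> (\<forall>a b. D (a * b) = a * D b + D a * b)"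

text \<open>
Functions of the form c(n,t,lambda) (1+lambda)^n e^{+-xi(t,lambda)} with c a formal
Laurent series in lambda^{-1} are represented by int => 'a fls, where the fls variable
X stands for lambda^{-1}; the value at n is c(n) (1+lambda)^n (so the shift Gamma acts
ordinarily), while the factor e^{c xi} (charge c in {1,0,-1}) is left implicit and
is accounted for in the time derivatives (see tder).
\<close>

definition qinv :: "('a::comm_ring_1) fls" where
  "qinv = Abs_fls (\<lambda>j. if 1 \<le> j then (-1) ^ nat (j - 1) else 0)"
  \<comment> \<open>(1+lambda)^(-1) = sum_{j>=1} (-1)^(j-1) lambda^(-j)\<close>

definition qpow :: "int \<Rightarrow> ('a::comm_ring_1) fls" where
  "qpow n = (if 0 \<le> n then (1 + fls_X_inv) ^ nat n else qinv ^ nat (- n))"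

definition fls_cmap :: "('a::zero \<Rightarrow> 'a) \<Rightarrow> 'a fls \<Rightarrow> 'a fls" where
  "fls_cmap h f = Abs_fls (\<lambda>m. h (fls_nth f m))"

text \<open>Symbol sum_j P_j(n) lambda^j of P (= P applied to (1+lambda)^n, divided by it).\<close>
definition pdo_sym :: "('a::zero) pdo \<Rightarrow> int \<Rightarrow> 'a fls" where
  "pdo_sym P n = Abs_fls (\<lambda>m. P (- m) n)"

text \<open>Wave function w(n,t,lambda) = Z(n) (1+lambda)^n e^{xi}.\<close>
definition wave :: "('a::comm_ring_1) pdo \<Rightarrow> int \<Rightarrow> 'a fls" where
  "wave Z n = pdo_sym Z n * qpow n"

text \<open>P^* (1+lambda)^{-n} for P = sum_j p_j Delta^j, P^* = sum_j (Delta^*)^j p_j, using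
  (Delta^*)^j o g = sum_i binom(j,i) ((Delta^*)^i g)(n-j+i) (Delta^*)^(j-i) and
  (Delta^*)^k (1+lambda)^{-n} = lambda^k (1+lambda)^{-n}.\<close>
definition adj_exp_apply :: "('a::comm_ring_1) pdo \<Rightarrow> int \<Rightarrow> 'a fls" where
  "adj_exp_apply P n = Abs_fls (\<lambda>m. fsum (\<lambda>(j::int, i::nat).
       if int i - j = m then of_int (ibinom j i) * fdiffs i (P j) (n - j + int i) else 0))
     * qpow (- n)"

text \<open>Adjoint wave function w^*(n,t,lambda) = (Z^{-1}(n-1) Delta^{-1})^* (1+lambda)^{-n} e^{-xi}.\<close>
definition wave_adj :: "('a::comm_ring_1) pdo \<Rightarrow> int \<Rightarrow> 'a fls" where
  "wave_adj Zi = adj_exp_apply (\<lambda>j. shf (-1) (Zi (j + 1)))"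

text \<open>Time derivative d/dt_k of a function of charge c (implicit factor e^{c xi}).\<close>
definition tder :: "(nat \<Rightarrow> 'a \<Rightarrow> 'a) \<Rightarrow> int \<Rightarrow> nat \<Rightarrow> ('a::comm_ring_1) fls fn \<Rightarrow> 'a fls fn" where
  "tder dt c k f = (\<lambda>n. fls_cmap (dt k) (f n) + of_int c * fls_X_intpow (- int k) * f n)"

definition is_eigenfunction :: "(nat \<Rightarrow> 'a \<Rightarrow> 'a) \<Rightarrow> ('a::comm_ring_1) pdo \<Rightarrow> 'a fn \<Rightarrow> bool" where
  "is_eigenfunction dt L phi \<longleftrightarrow>
     (\<forall>k\<ge>1. \<forall>n. dt k (phi n) = pdo_apply (pdo_pos (pdo_pow L k)) phi n)"

definition is_adj_eigenfunction :: "(nat \<Rightarrow> 'a \<Rightarrow> 'a) \<Rightarrow> ('a::comm_ring_1) pdo \<Rightarrow> 'a fn \<Rightarrow> bool" where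
  "is_adj_eigenfunction dt L psi \<longleftrightarrow>
     (\<forall>k\<ge>1. \<forall>n. dt k (psi n) = - adj_conj_apply (pdo_pos (pdo_pow L k)) psi n)"

text \<open>S is the squared eigenfunction potential S(F, G) (G playing the role of Delta psi),
  S having charge c: Delta S = F G and
  d/dt_k S = res_Delta(Gamma Delta^{-1} G (L^k)_{>=1} F Delta^{-1}).\<close>
definition is_sep :: "(nat \<Rightarrow> 'a \<Rightarrow> 'a) \<Rightarrow> int \<Rightarrow> ('a::comm_ring_1) pdo
    \<Rightarrow> 'a fls fn \<Rightarrow> 'a fls fn \<Rightarrow> 'a fls fn \<Rightarrow> bool" where
  "is_sep dt c L F G S \<longleftrightarrow>
     (\<forall>n. fdiff 1 S n = F n * G n) \<and>
     (\<forall>k\<ge>1. tder dt c k S =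
        pdo_res (pdo_mult pdo_Gamma (pdo_mult pdo_Dinv (pdo_mult (pdo_fn G)
          (pdo_mult (pdo_pos (pdo_pow (pdo_map fls_const L) k)) (pdo_mult (pdo_fn F) pdo_Dinv))))))"

end

theory Submission
  imports Defs
begin

notation fls_nth (infixl \<open>$$\<close> 75)


definition fin :: "('b \<Rightarrow> 'r::zero) \<Rightarrow> bool" where
  "fin f \<longleftrightarrow> finite {x. f x \<noteq> 0}"

lemma fsum_eq:
  assumes "finite S" "\<And>x. f x \<noteq> 0 \<Longrightarrow> x \<in> S"
  shows "fsum f = sum f S"
  unfolding fsum_def
  by (rule sum.mono_neutral_left) (use assms in auto)

lemma finI: "finite S \<Longrightarrow> (\<And>x. f x \<noteq> 0 \<Longrightarrow> x \<in> S) \<Longrightarrow> fin f"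
  unfolding fin_def by (rule finite_subset[of _ S]) auto

lemma fsum_zero[simp]: "fsum (\<lambda>x. 0) = 0"
  by (simp add: fsum_def)

lemma fsum_cong: assumes "\<And>x. f x = g x" shows "fsum f = fsum g"
proof -
  have "f = g" using assms by (rule ext)
  then show ?thesis by simp
qed

lemma fsum_add:
  fixes f g :: "'b \<Rightarrow> 'r::comm_monoid_add"
  assumes "fin f" "fin g"
  shows "fsum (\<lambda>x. f x + g x) = fsum f + fsum g"
proof -
  let ?S = "{x. f x \<noteq> 0} \<union> {x. g x \<noteq> 0}"
  have fS: "finite ?S" using assms by (simp add: fin_def)
  have "fsum (\<lambda>x. f x + g x) = sum (\<lambda>x. f x + g x) ?S"
    by (rule fsum_eq[OF fS]) (auto)
  also have "\<dots> = sum f ?S + sum g ?S" by (simp add: sum.distrib)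
  also have "sum f ?S = fsum f" by (rule fsum_eq[symmetric, OF fS]) auto
  also have "sum g ?S = fsum g" by (rule fsum_eq[symmetric, OF fS]) auto
  finally show ?thesis .
qed

lemma fsum_neg:
  fixes f :: "'b \<Rightarrow> 'r::ab_group_add"
  shows "fsum (\<lambda>x. - f x) = - fsum f"
  unfolding fsum_def by (simp add: sum_negf)

lemma fsum_diff:
  fixes f g :: "'b \<Rightarrow> 'r::ab_group_add"
  assumes "fin f" "fin g"
  shows "fsum (\<lambda>x. f x - g x) = fsum f - fsum g"
proof -
  have "fin (\<lambda>x. - g x)" using assms(2) by (simp add: fin_def)
  then have "fsum (\<lambda>x. f x + - g x) = fsum f + fsum (\<lambda>x. - g x)"
    using fsum_add[OF assms(1)] by blast
  then show ?thesis by (simp add: fsum_neg)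
qed

lemma fsum_cmult:
  fixes f :: "'b \<Rightarrow> 'r::comm_semiring_1"
  assumes "fin f"
  shows "fsum (\<lambda>x. c * f x) = c * fsum f"
proof -
  have fS: "finite {x. f x \<noteq> 0}" using assms by (simp add: fin_def)
  have "fsum (\<lambda>x. c * f x) = sum (\<lambda>x. c * f x) {x. f x \<noteq> 0}"
    by (rule fsum_eq[OF fS]) auto
  also have "\<dots> = c * fsum f" by (simp add: fsum_def sum_distrib_left)
  finally show ?thesis .
qed

lemma fsum_multc:
  fixes f :: "'b \<Rightarrow> 'r::comm_semiring_1"
  assumes "fin f"
  shows "fsum (\<lambda>x. f x * c) = fsum f * c"
  using fsum_cmult[OF assms, of c] by (simp add: mult.commute)

lemma fin_add: "fin f \<Longrightarrow> fin g \<Longrightarrow> fin (\<lambda>x. f x + (g x::'r::monoid_add))"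
  unfolding fin_def by (rule finite_subset[of _ "{x. f x \<noteq> 0} \<union> {x. g x \<noteq> 0}"]) auto

lemma fin_diff: "fin f \<Longrightarrow> fin g \<Longrightarrow> fin (\<lambda>x. f x - (g x::'r::group_add))"
  unfolding fin_def by (rule finite_subset[of _ "{x. f x \<noteq> 0} \<union> {x. g x \<noteq> 0}"]) auto

lemma fin_neg: "fin f \<Longrightarrow> fin (\<lambda>x. - (f x::'r::group_add))"
  unfolding fin_def by simp

lemma fin_cmult: "fin f \<Longrightarrow> fin (\<lambda>x. c * (f x::'r::mult_zero))"
  unfolding fin_def by (rule finite_subset[of _ "{x. f x \<noteq> 0}"]) auto

lemma fin_multc: "fin f \<Longrightarrow> fin (\<lambda>x. (f x::'r::mult_zero) * c)"
  unfolding fin_def by (rule finite_subset[of _ "{x. f x \<noteq> 0}"]) auto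

lemma fsum_sum:
  fixes f :: "'i \<Rightarrow> 'b \<Rightarrow> 'r::comm_monoid_add"
  assumes "finite I" "\<And>i. i \<in> I \<Longrightarrow> fin (f i)"
  shows "fsum (\<lambda>x. \<Sum>i\<in>I. f i x) = (\<Sum>i\<in>I. fsum (f i))"
  using assms
proof (induction I rule: finite_induct)
  case empty then show ?case by simp
next
  case (insert a I)
  have fI: "fin (\<lambda>x. \<Sum>i\<in>I. f i x)"
  proof -
    have "finite (\<Union>i\<in>I. {x. f i x \<noteq> 0})"
      using insert by (auto simp: fin_def)
    then show ?thesis
    proof (rule finI)
      fix x assume h: "(\<Sum>i\<in>I. f i x) \<noteq> 0"
      have "\<exists>i\<in>I. f i x \<noteq> 0"
      proof (rule ccontr)
        assume "\<not> (\<exists>i\<in>I. f i x \<noteq> 0)"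
        then have "(\<Sum>i\<in>I. f i x) = 0" by (simp add: sum.neutral)
        then show False using h by simp
      qed
      then show "x \<in> (\<Union>i\<in>I. {x. f i x \<noteq> 0})" by auto
    qed
  qed
  have "fsum (\<lambda>x. \<Sum>i\<in>insert a I. f i x) = fsum (\<lambda>x. f a x + (\<Sum>i\<in>I. f i x))"
    using insert by simp
  also have "\<dots> = fsum (f a) + fsum (\<lambda>x. \<Sum>i\<in>I. f i x)"
    by (rule fsum_add) (use insert fI in auto)
  finally show ?case using insert by simp
qed

lemma fsum_single: "(\<And>x. x \<noteq> a \<Longrightarrow> f x = 0) \<Longrightarrow> fsum f = f a"
  by (subst fsum_eq[of "{a}"]) auto

lemma fsum_reindex_int: "fsum (\<lambda>s::int. f (s + c)) = fsum f"
proof -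
  have "{s. f (s + c) \<noteq> 0} = (\<lambda>s. s - c) ` {s. f s \<noteq> 0}"
  proof (intro set_eqI iffI)
    fix s assume "s \<in> {s. f (s + c) \<noteq> 0}"
    then show "s \<in> (\<lambda>s. s - c) ` {s. f s \<noteq> 0}" by (intro image_eqI[of _ _ "s + c"]) auto
  qed auto
  then have "fsum (\<lambda>s. f (s + c)) = sum (\<lambda>s. f (s + c)) ((\<lambda>s. s - c) ` {s. f s \<noteq> 0})"
    by (simp add: fsum_def)
  also have "\<dots> = sum (\<lambda>s. f (s - c + c)) {s. f s \<noteq> 0}"
    by (subst sum.reindex) (auto simp: inj_on_def)
  also have "\<dots> = fsum f" by (simp add: fsum_def)
  finally show ?thesis .
qed

lemma fsum_nat_Suc:
  fixes f :: "nat \<Rightarrow> 'r::comm_monoid_add"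
  assumes "fin f"
  shows "fsum f = f 0 + fsum (\<lambda>i. f (Suc i))"
proof -
  have "finite {x. f x \<noteq> 0}" using assms by (simp add: fin_def)
  then obtain N where "\<forall>x\<in>{x. f x \<noteq> 0}. x \<le> N" by (auto simp: finite_nat_set_iff_bounded_le)
  then have N: "\<And>x. f x \<noteq> 0 \<Longrightarrow> x \<le> N" by auto
  have "fsum f = sum f {..Suc N}" by (rule fsum_eq) (auto dest: N)
  also have "\<dots> = f 0 + sum (\<lambda>i. f (Suc i)) {..N}" by (rule sum.atMost_Suc_shift)
  also have "sum (\<lambda>i. f (Suc i)) {..N} = fsum (\<lambda>i. f (Suc i))"
    by (rule fsum_eq[symmetric]) (auto dest: N)
  finally show ?thesis .
qed

lemma fsum_pairs:
  fixes F :: "'b \<Rightarrow> 'c \<Rightarrow> 'r::comm_monoid_add"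
  assumes "fin (\<lambda>(x,y). F x y)"
  shows "fsum (\<lambda>(x,y). F x y) = fsum (\<lambda>x. fsum (\<lambda>y. F x y))"
proof -
  let ?P = "{(x,y). F x y \<noteq> 0}"
  have fP: "finite ?P" using assms by (simp add: fin_def case_prod_unfold)
  let ?K = "fst ` ?P"
  have fK: "finite ?K" using fP by simp
  have fI: "finite {y. F x y \<noteq> 0}" for x
  proof -
    have "{y. F x y \<noteq> 0} = snd ` (?P \<inter> {p. fst p = x})"
    proof (intro set_eqI iffI)
      fix y assume "y \<in> {y. F x y \<noteq> 0}"
      then show "y \<in> snd ` (?P \<inter> {p. fst p = x})" by (intro image_eqI[of _ _ "(x,y)"]) auto
    qed auto
    then show ?thesis using fP by simp
  qed
  have "fsum (\<lambda>x. fsum (\<lambda>y. F x y)) = (\<Sum>x\<in>?K. fsum (\<lambda>y. F x y))"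
  proof (rule fsum_eq[OF fK])
    fix x assume "fsum (\<lambda>y. F x y) \<noteq> 0"
    have "\<exists>y. F x y \<noteq> 0"
    proof (rule ccontr)
      assume "\<not> (\<exists>y. F x y \<noteq> 0)"
      then have "(\<lambda>y. F x y) = (\<lambda>y. 0)" by auto
      then have "fsum (\<lambda>y. F x y) = 0" by simp
      then show False using \<open>fsum (\<lambda>y. F x y) \<noteq> 0\<close> by simp
    qed
    then obtain y where "F x y \<noteq> 0" by blast
    then show "x \<in> ?K" by (force simp: image_iff)
  qed
  also have "\<dots> = (\<Sum>x\<in>?K. \<Sum>y\<in>{y. F x y \<noteq> 0}. F x y)"
    by (simp add: fsum_def)
  also have "\<dots> = (\<Sum>(x,y)\<in>Sigma ?K (\<lambda>x. {y. F x y \<noteq> 0}). F x y)"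
    by (rule sum.Sigma) (use fK fI in auto)
  also have "Sigma ?K (\<lambda>x. {y. F x y \<noteq> 0}) = ?P" by (force simp: image_iff)
  also have "(\<Sum>(x,y)\<in>?P. F x y) = fsum (\<lambda>(x,y). F x y)"
    by (simp add: fsum_def case_prod_unfold)
  finally show ?thesis by simp
qed

lemma fsum_swap:
  fixes F :: "'b \<Rightarrow> 'c \<Rightarrow> 'r::comm_monoid_add"
  assumes "fin (\<lambda>(x,y). F x y)"
  shows "fsum (\<lambda>x. fsum (\<lambda>y. F x y)) = fsum (\<lambda>y. fsum (\<lambda>x. F x y))"
proof -
  have a2: "fin (\<lambda>(y,x). F x y)"
  proof -
    have "{p. (case p of (y,x) \<Rightarrow> F x y) \<noteq> 0} = prod.swap ` {p. (case p of (x,y) \<Rightarrow> F x y) \<noteq> 0}"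
      by (auto simp: image_iff)
    then show ?thesis using assms by (simp add: fin_def)
  qed
  have "fsum (\<lambda>(y,x). F x y) = fsum (\<lambda>(x,y). F x y)"
  proof -
    have "fsum (\<lambda>(y,x). F x y) = sum (\<lambda>(y,x). F x y) (prod.swap ` {p. (case p of (x,y) \<Rightarrow> F x y) \<noteq> 0})"
      unfolding fsum_def by (rule arg_cong[where f="sum _"]) (auto simp: image_iff)
    also have "\<dots> = fsum (\<lambda>(x,y). F x y)"
      unfolding fsum_def by (subst sum.reindex) (auto simp: case_prod_unfold)
    finally show ?thesis .
  qed
  then show ?thesis using fsum_pairs[OF assms] fsum_pairs[OF a2] by simp
qed

lemma fin_pairs_box:
  assumes "finite A" "finite B" "\<And>x y. F x y \<noteq> 0 \<Longrightarrow> x \<in> A \<and> y \<in> B"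
  shows "fin (\<lambda>(x,y). F x y)"
  by (rule finI[of "A \<times> B"]) (use assms in auto)




lemma ibinom_rat: "(of_int (ibinom k i) :: rat) = (of_int k) gchoose i"
proof (cases "0 \<le> k")
  case True
  then have k: "(of_int k :: rat) = of_nat (nat k)" by simp
  show ?thesis using True unfolding ibinom_def k by (simp add: binomial_gbinomial)
next
  case False
  have "(of_int k :: rat) gchoose i = (-1)^i * ((of_nat i - of_int k - 1) gchoose i)"
    by (rule gbinomial_negated_upper)
  also have "(of_nat i - of_int k - 1 :: rat) = of_nat (nat (- k) + i - 1)"
    using False by (simp add: of_nat_diff)
  finally show ?thesis using False by (simp add: ibinom_def binomial_gbinomial)
qed

lemma ibinom_Pascal: "ibinom (k + 1) (Suc i) = ibinom k (Suc i) + ibinom k i"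
proof -
  have "(of_int (ibinom (k + 1) (Suc i)) :: rat) = of_int (ibinom k (Suc i) + ibinom k i)"
    unfolding of_int_add ibinom_rat by (simp add: gbinomial_Suc_Suc)
  then show ?thesis by (simp only: of_int_eq_iff)
qed

lemma ibinom_0_right[simp]: "ibinom k 0 = 1"
  by (simp add: ibinom_def)

lemma ibinom_0_left: "ibinom 0 i = (if i = 0 then 1 else 0)"
  by (simp add: ibinom_def)

lemma ibinom_1_left: "ibinom 1 i = (if i \<le> 1 then 1 else 0)"
  by (cases i) (auto simp: ibinom_def)

lemma fdiff_zero_fun: "fdiff i (\<lambda>n. 0) = (\<lambda>n. 0)"
  by (induction i) auto

lemma fdiff_const: "fdiff i (\<lambda>n. c) = (\<lambda>n. if i = 0 then c else 0)"
  by (induction i) auto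

lemma fdiff_shift: "fdiff i (\<lambda>n. f (n + c)) p = fdiff i f (p + c)"
  by (induction i arbitrary: p) (auto simp: algebra_simps)

lemma fdiff_add: "fdiff i (\<lambda>n. f n + g n) p = fdiff i f p + fdiff i g p"
  by (induction i arbitrary: p) (auto simp: algebra_simps)

lemma fdiff_diff: "fdiff i (\<lambda>n. f n - g n) p = fdiff i f p - fdiff i g p"
  by (induction i arbitrary: p) (auto simp: algebra_simps)

lemma fdiff_neg: "fdiff i (\<lambda>n. - f n) p = - fdiff i f p"
  by (induction i arbitrary: p) (auto simp: algebra_simps)

lemma fdiff_sum: "fdiff i (\<lambda>n. \<Sum>x\<in>I. f x n) p = (\<Sum>x\<in>I. fdiff i (f x) p)"
  by (induction i arbitrary: p) (auto simp: sum_subtractf)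

lemma fdiffs_shift: "fdiffs i (\<lambda>n. f (n + c)) p = fdiffs i f (p + c)"
  by (induction i arbitrary: p) (auto simp: algebra_simps)

lemma fdiffs_add: "fdiffs i (\<lambda>n. f n + g n) p = fdiffs i f p + fdiffs i g p"
  by (induction i arbitrary: p) (auto simp: algebra_simps)

lemma fdiffs_diff: "fdiffs i (\<lambda>n. f n - g n) p = fdiffs i f p - fdiffs i g p"
  by (induction i arbitrary: p) (auto simp: algebra_simps)

lemma fdiffs_neg: "fdiffs i (\<lambda>n. - f n) p = - fdiffs i f p"
  by (induction i arbitrary: p) (auto simp: algebra_simps)

lemma fdiffs_sum: "fdiffs i (\<lambda>n. \<Sum>x\<in>I. f x n) p = (\<Sum>x\<in>I. fdiffs i (f x) p)"
  by (induction i arbitrary: p) (auto simp: sum_subtractf)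

lemma fdiffs_zero_fun: "fdiffs i (\<lambda>n. 0) = (\<lambda>n. 0)"
  by (induction i) auto

locale drv =
  fixes D :: "'a::comm_ring_1 \<Rightarrow> 'a"
  assumes der: "is_derivation D"
begin

lemma add: "D (a + b) = D a + D b"
  using der by (simp add: is_derivation_def)

lemma mult: "D (a * b) = a * D b + D a * b"
  using der by (simp add: is_derivation_def)

lemma zero[simp]: "D 0 = 0"
  using add[of 0 0] by simp

lemma neg: "D (- a) = - D a"
proof -
  have "D a + D (- a) = 0" using add[of a "- a"] by simp
  then show ?thesis by (metis add.commute eq_neg_iff_add_eq_0)
qed

lemma diff: "D (a - b) = D a - D b"
  using add[of a "- b"] neg[of b] by simp

lemma one[simp]: "D 1 = 0"
  using mult[of 1 1] by simp

lemma of_nat[simp]: "D (of_nat k) = 0"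
  by (induction k) (simp_all add: add)

lemma of_int[simp]: "D (of_int k) = 0"
proof (cases "0 \<le> k")
  case True
  then have "(of_int k :: 'a) = of_nat (nat k)" by simp
  then show ?thesis by simp
next
  case False
  then have "(of_int k :: 'a) = - of_nat (nat (- k))" by simp
  then show ?thesis by (simp add: neg)
qed

lemma of_int_mult: "D (of_int k * a) = of_int k * D a"
  by (simp add: mult)

lemma sum: "D (\<Sum>x\<in>I. f x) = (\<Sum>x\<in>I. D (f x))"
  by (induction I rule: infinite_finite_induct) (simp_all add: add)

lemma fsum: "fin f \<Longrightarrow> D (fsum f) = fsum (\<lambda>x. D (f x))"
proof -
  assume "fin f"
  then have fS: "finite {x. f x \<noteq> 0}" by (simp add: fin_def)
  have "fsum (\<lambda>x. D (f x)) = sum (\<lambda>x. D (f x)) {x. f x \<noteq> 0}"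
    by (rule fsum_eq[OF fS]) (auto)
  then show ?thesis by (simp add: fsum_def sum)
qed

lemma fdiff: "D (fdiff i f p) = fdiff i (\<lambda>n. D (f n)) p"
  by (induction i arbitrary: p) (simp_all add: diff)

lemma fdiffs: "D (fdiffs i f p) = fdiffs i (\<lambda>n. D (f n)) p"
  by (induction i arbitrary: p) (simp_all add: diff)

end

section \<open>Pseudo-difference operators\<close>

definition pwf :: "('r::zero) pdo \<Rightarrow> int \<Rightarrow> bool" where
  "pwf A b \<longleftrightarrow> (\<forall>j>b. \<forall>n. A j n = 0)"

definition E :: "int \<Rightarrow> ('r::{zero,one}) pdo" where
  "E k = (\<lambda>j n. if j = k then 1 else 0)"

lemma pdo_one_E: "pdo_one = E 0" by (simp add: pdo_one_def E_def)
lemma pdo_Delta_E: "pdo_Delta = E 1" by (simp add: pdo_Delta_def E_def)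
lemma pdo_Dinv_E: "pdo_Dinv = E (-1)" by (simp add: pdo_Dinv_def E_def)
lemma pdo_one_fn: "pdo_one = pdo_fn (\<lambda>n. 1)" by (simp add: pdo_one_def pdo_fn_def)

lemma pwf_E: "pwf (E k) k" by (simp add: pwf_def E_def)
lemma pwf_fn: "pwf (pdo_fn g) 0" by (simp add: pwf_def pdo_fn_def)
lemma pwf_mono: "pwf A a \<Longrightarrow> a \<le> b \<Longrightarrow> pwf A b" by (simp add: pwf_def)
lemma pwfD: "pwf A b \<Longrightarrow> b < j \<Longrightarrow> A j n = 0" by (simp add: pwf_def)
lemma pwfD': "pwf A b \<Longrightarrow> b < j \<Longrightarrow> A j = (\<lambda>n. 0)" by (auto simp: pwf_def)
lemma pdo_wf_pwf: "pdo_wf A \<longleftrightarrow> (\<exists>b. pwf A b)" by (simp add: pdo_wf_def pwf_def)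

lemma pwf_add: "pwf (A::('r::comm_ring_1) pdo) a \<Longrightarrow> pwf B a \<Longrightarrow> pwf (\<lambda>j n. A j n + B j n) a"
  by (simp add: pwf_def)
lemma pwf_diff: "pwf (A::('r::comm_ring_1) pdo) a \<Longrightarrow> pwf B a \<Longrightarrow> pwf (\<lambda>j n. A j n - B j n) a"
  by (simp add: pwf_def)
lemma pwf_neg: "pwf (A::('r::comm_ring_1) pdo) a \<Longrightarrow> pwf (\<lambda>j n. - A j n) a"
  by (simp add: pwf_def)
lemma pwf_sum: "(\<And>i. i \<in> I \<Longrightarrow> pwf (A i :: ('r::comm_ring_1) pdo) a) \<Longrightarrow> pwf (\<lambda>j n. \<Sum>i\<in>I. A i j n) a"
  by (simp add: pwf_def)
lemma pwf_map: "pwf A a \<Longrightarrow> h 0 = 0 \<Longrightarrow> pwf (pdo_map h A) a"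
  by (simp add: pwf_def pdo_map_def)

definition dm :: "int \<Rightarrow> ('r::comm_ring_1) pdo \<Rightarrow> int \<Rightarrow> int \<Rightarrow> 'r" where
  "dm k B r n = fsum (\<lambda>i::nat. of_int (ibinom k i) * fdiff i (B (r - k + int i)) (n + k - int i))"

lemma fin_dm_terms:
  assumes "pwf B b"
  shows "fin (\<lambda>i::nat. of_int (ibinom k i) * fdiff i (B (r - k + int i)) (n + k - int i))"
proof (rule finI[of "{..nat (b - r + k)}"])
  fix i assume "of_int (ibinom k i) * fdiff i (B (r - k + int i)) (n + k - int i) \<noteq> 0"
  then have "fdiff i (B (r - k + int i)) (n + k - int i) \<noteq> 0" by auto
  then have "\<not> b < r - k + int i" using pwfD'[OF assms] fdiff_zero_fun by metis
  then show "i \<in> {..nat (b - r + k)}" by auto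
qed simp

lemma dm_zero:
  assumes "pwf B b" "k < r - b"
  shows "dm k B r n = 0"
proof -
  have "fdiff i (B (r - k + int i)) (n + k - int i) = 0" for i :: nat
  proof -
    have "B (r - k + int i) = (\<lambda>n. 0)" using assms by (intro pwfD') auto
    then show ?thesis by (simp add: fdiff_zero_fun)
  qed
  then show ?thesis by (simp add: dm_def)
qed

lemma fin_pwf_low:
  fixes A :: "('r::comm_ring_1) pdo"
  assumes "pwf A a" "\<And>s. s < L \<Longrightarrow> h s = 0"
  shows "fin (\<lambda>s. A s p * h s)"
proof (rule finI[of "{L..a}"])
  fix s assume "A s p * h s \<noteq> 0"
  then show "s \<in> {L..a}" using assms pwfD[OF assms(1)] by (cases "s < L"; cases "a < s") auto
qed simp

lemma pdo_mult_dm: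
  fixes A B :: "('r::comm_ring_1) pdo"
  assumes A: "pwf A a" and B: "pwf B b"
  shows "pdo_mult A B r n = fsum (\<lambda>k. A k n * dm k B r n)"
proof -
  let ?F = "\<lambda>k (i::nat). A k n * of_int (ibinom k i) * fdiff i (B (r - k + int i)) (n + k - int i)"
  have fin2: "fin (\<lambda>(k,i). ?F k i)"
  proof (rule fin_pairs_box[of "{r - b..a}" "{..nat (b - r + a)}"])
    fix k i assume h: "?F k i \<noteq> 0"
    then have "A k n \<noteq> 0" by auto
    then have ka: "k \<le> a" using pwfD[OF A] by force
    from h have "fdiff i (B (r - k + int i)) (n + k - int i) \<noteq> 0" by auto
    then have "\<not> b < r - k + int i" using pwfD'[OF B] fdiff_zero_fun by metis
    then show "k \<in> {r - b..a} \<and> i \<in> {..nat (b - r + a)}" using ka by auto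
  qed auto
  have "pdo_mult A B r n = fsum (\<lambda>(k,i). ?F k i)"
    by (simp add: pdo_mult_def)
  also have "\<dots> = fsum (\<lambda>k. fsum (\<lambda>i. ?F k i))" by (rule fsum_pairs[OF fin2])
  also have "\<dots> = fsum (\<lambda>k. A k n * dm k B r n)"
  proof (rule fsum_cong)
    fix k
    have "fsum (\<lambda>i. ?F k i) = fsum (\<lambda>i. A k n * (of_int (ibinom k i) * fdiff i (B (r - k + int i)) (n + k - int i)))"
      by (simp add: mult.assoc)
    also have "\<dots> = A k n * dm k B r n"
      unfolding dm_def by (rule fsum_cmult[OF fin_dm_terms[OF B]])
    finally show "fsum (\<lambda>i. ?F k i) = A k n * dm k B r n" .
  qed
  finally show ?thesis .
qed

lemma fin_mult_terms:
  assumes "pwf A a" "pwf B b"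
  shows "fin (\<lambda>k. A k n * dm k B r n)"
  by (rule fin_pwf_low[OF assms(1)]) (use dm_zero[OF assms(2)] in auto)

lemma pwf_mult:
  assumes "pwf A a" "pwf B b"
  shows "pwf (pdo_mult A B) (a + b)"
  unfolding pwf_def
proof (intro allI impI)
  fix r n assume r: "a + b < r"
  have "A k n * dm k B r n = 0" for k
  proof (cases "a < k")
    case True then show ?thesis using pwfD[OF assms(1)] by simp
  next
    case False then show ?thesis using dm_zero[OF assms(2), of k r] r by simp
  qed
  then show "pdo_mult A B r n = 0" by (simp add: pdo_mult_dm[OF assms])
qed

lemma pdo_wf_mult: "pdo_wf A \<Longrightarrow> pdo_wf B \<Longrightarrow> pdo_wf (pdo_mult A B)"
  unfolding pdo_wf_pwf using pwf_mult by blast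

lemma mult_E_left:
  assumes "pwf B b"
  shows "pdo_mult (E k) B r n = dm k B r n"
proof -
  have "pdo_mult (E k) B r n = fsum (\<lambda>k'. E k k' n * dm k' B r n)"
    by (rule pdo_mult_dm[OF pwf_E assms])
  also have "\<dots> = E k k n * dm k B r n"
    by (rule fsum_single) (simp add: E_def)
  finally show ?thesis by (simp add: E_def)
qed

lemma DeltaL: "pdo_mult pdo_Delta X r n = X (r - 1) (n + 1) + (X r (n + 1) - X r n)"
proof -
  let ?F = "\<lambda>(k::int, i::nat). pdo_Delta k n * of_int (ibinom k i) * fdiff i (X (r - k + int i)) (n + k - int i)"
  have "fsum ?F = sum ?F {(1,0), (1,1)}"
  proof (rule fsum_eq)
    fix p assume "?F p \<noteq> 0"
    then show "p \<in> {(1,0),(1,1)}"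
      by (cases p) (auto simp: pdo_Delta_def ibinom_1_left split: if_splits)
  qed simp
  then show ?thesis by (simp add: pdo_mult_def pdo_Delta_def ibinom_1_left)
qed

lemma mult_E_right: "pdo_mult X (E k) r n = X (r - k) n"
proof -
  let ?F = "\<lambda>(k'::int, i::nat). X k' n * of_int (ibinom k' i) * fdiff i (E k (r - k' + int i)) (n + k' - int i)"
  have e: "E k j = (\<lambda>n. if j = k then 1 else 0)" for j by (simp add: E_def)
  have "fsum ?F = sum ?F {(r - k, 0)}"
  proof (rule fsum_eq)
    fix p assume "?F p \<noteq> 0"
    then show "p \<in> {(r - k, 0)}"
      by (cases p) (auto simp: e fdiff_const split: if_splits)
  qed simp
  then show ?thesis by (simp add: pdo_mult_def e)
qed

lemma mult_fn_left: "pdo_mult (pdo_fn g) X r n = g n * X r n"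
proof -
  let ?F = "\<lambda>(k::int, i::nat). pdo_fn g k n * of_int (ibinom k i) * fdiff i (X (r - k + int i)) (n + k - int i)"
  have "fsum ?F = sum ?F {(0, 0)}"
  proof (rule fsum_eq)
    fix p assume "?F p \<noteq> 0"
    then show "p \<in> {(0, 0)}"
      by (cases p) (auto simp: pdo_fn_def ibinom_0_left split: if_splits)
  qed simp
  then show ?thesis by (simp add: pdo_mult_def pdo_fn_def)
qed

lemma E_mult_E: "pdo_mult (E k) (E j) = E (k + j)"
  by (intro ext) (simp only: mult_E_right, auto simp: E_def)

lemma mult_one_left: "pdo_mult pdo_one X = X"
  by (intro ext) (simp add: pdo_one_fn mult_fn_left)

lemma mult_one_right: "pdo_mult X pdo_one = X"
  by (intro ext) (simp add: pdo_one_E mult_E_right)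

lemma mult_E0_left: "pdo_mult (E 0) X = X"
  using mult_one_left by (simp add: pdo_one_E)

lemma Delta_inj:
  assumes X: "pwf X x" and Y: "pwf Y y" and eq: "pdo_mult pdo_Delta X = pdo_mult pdo_Delta Y"
  shows "X = Y"
proof -
  define M where "M = max x y"
  define Dd where "Dd = (\<lambda>j n. X j n - Y j n)"
  have DM: "Dd j n = 0" if "M < j" for j n
    using that pwfD[OF X] pwfD[OF Y] by (simp add: Dd_def M_def)
  have rel: "Dd (r - 1) (n + 1) + (Dd r (n + 1) - Dd r n) = 0" for r n
  proof -
    have "pdo_mult pdo_Delta X r n = pdo_mult pdo_Delta Y r n" using eq by simp
    then show ?thesis unfolding DeltaL Dd_def by (simp add: algebra_simps)
  qed
  have main: "\<forall>r n. M + 1 - int d \<le> r \<longrightarrow> Dd r n = 0" for d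
  proof (induction d)
    case 0 then show ?case using DM by auto
  next
    case (Suc d)
    show ?case
    proof (intro allI impI)
      fix r n assume r: "M + 1 - int (Suc d) \<le> r"
      show "Dd r n = 0"
      proof (cases "M + 1 - int d \<le> r")
        case True then show ?thesis using Suc by blast
      next
        case False
        then have "M + 1 - int d \<le> r + 1" using r by simp
        then have z: "Dd (r + 1) m = 0" for m using Suc by blast
        have "Dd (r + 1 - 1) (n - 1 + 1) + (Dd (r + 1) (n - 1 + 1) - Dd (r + 1) (n - 1)) = 0"
          by (rule rel)
        then show ?thesis using z by simp
      qed
    qed
  qed
  have "Dd r n = 0" for r n using main[of "nat (M + 1 - r)"] by simp
  then show ?thesis by (intro ext) (simp add: Dd_def)
qed




lemma fin_int_box: "(\<And>s::int. f s \<noteq> 0 \<Longrightarrow> L \<le> s \<and> s \<le> U) \<Longrightarrow> fin f"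
  by (rule finI[of "{L..U}"]) auto

lemma fin_nat_box: "(\<And>i::nat. N < i \<Longrightarrow> f i = 0) \<Longrightarrow> fin f"
  by (rule finI[of "{..N}"]) (auto simp: not_le[symmetric])

lemma dmP:
  fixes C :: "('r::comm_ring_1) pdo"
  assumes C: "pwf C c"
  shows "dm (s + 1) C r n + dm s C r n = dm s C (r - 1) (n + 1) + dm s C r (n + 1)"
proof -
  define G where "G i = fdiff i (C (r - s - 1 + int i)) (n + s + 1 - int i)" for i
  define N where "N = nat (c - r + s + 1)"
  have Gz: "G i = 0" if "N < i" for i
  proof -
    have "C (r - s - 1 + int i) = (\<lambda>n. 0)" using that by (intro pwfD'[OF C]) (simp add: N_def)
    then show ?thesis by (simp add: G_def fdiff_zero_fun)
  qed
  have fG: "fin (\<lambda>i. of_int (ibinom k i) * G i)" for k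
    by (rule fin_nat_box[of N]) (simp add: Gz)
  have fGS: "fin (\<lambda>i. of_int (ibinom k i) * G (Suc i))" for k
    by (rule fin_nat_box[of N]) (simp add: Gz)
  have fGS': "fin (\<lambda>i. of_int (ibinom k (Suc i)) * G (Suc i))" for k
    by (rule fin_nat_box[of N]) (simp add: Gz)
  have e1: "dm (s + 1) C r n = fsum (\<lambda>i. of_int (ibinom (s + 1) i) * G i)"
    unfolding dm_def G_def by (rule fsum_cong) (simp add: algebra_simps)
  have e2: "dm s C (r - 1) (n + 1) = fsum (\<lambda>i. of_int (ibinom s i) * G i)"
    unfolding dm_def G_def by (rule fsum_cong) (simp add: algebra_simps)
  have e3: "dm s C r (n + 1) - dm s C r n = fsum (\<lambda>i. of_int (ibinom s i) * G (Suc i))"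
  proof -
    have "dm s C r (n + 1) - dm s C r n =
       fsum (\<lambda>i. of_int (ibinom s i) * fdiff i (C (r - s + int i)) (n + 1 + s - int i)
               - of_int (ibinom s i) * fdiff i (C (r - s + int i)) (n + s - int i))"
      unfolding dm_def
      by (rule fsum_diff[symmetric, OF fin_dm_terms[OF C] fin_dm_terms[OF C]])
    also have "\<dots> = fsum (\<lambda>i. of_int (ibinom s i) * G (Suc i))"
      by (rule fsum_cong) (simp add: G_def algebra_simps)
    finally show ?thesis .
  qed
  have s1: "fsum (\<lambda>i. of_int (ibinom (s + 1) i) * G i)
      = G 0 + fsum (\<lambda>i. of_int (ibinom s (Suc i)) * G (Suc i)) + fsum (\<lambda>i. of_int (ibinom s i) * G (Suc i))"
  proof -
    have "fsum (\<lambda>i. of_int (ibinom (s + 1) i) * G i) = G 0 + fsum (\<lambda>i. of_int (ibinom (s + 1) (Suc i)) * G (Suc i))"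
      by (subst fsum_nat_Suc[OF fG]) simp
    also have "fsum (\<lambda>i. of_int (ibinom (s + 1) (Suc i)) * G (Suc i))
       = fsum (\<lambda>i. of_int (ibinom s (Suc i)) * G (Suc i) + of_int (ibinom s i) * G (Suc i))"
      by (rule fsum_cong) (simp only: ibinom_Pascal of_int_add distrib_right)
    also have "\<dots> = fsum (\<lambda>i. of_int (ibinom s (Suc i)) * G (Suc i)) + fsum (\<lambda>i. of_int (ibinom s i) * G (Suc i))"
      by (rule fsum_add[OF fGS' fGS])
    finally show ?thesis by (simp add: add.assoc)
  qed
  have s2: "fsum (\<lambda>i. of_int (ibinom s i) * G i) = G 0 + fsum (\<lambda>i. of_int (ibinom s (Suc i)) * G (Suc i))"
    by (subst fsum_nat_Suc[OF fG]) simp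
  show ?thesis using e1 e2 e3 s1 s2 by (simp add: algebra_simps)
qed

lemma M1:
  fixes B C :: "('r::comm_ring_1) pdo"
  assumes B: "pwf B b" and C: "pwf C c"
  shows "pdo_mult (pdo_mult pdo_Delta B) C = pdo_mult pdo_Delta (pdo_mult B C)"
proof (intro ext)
  fix r n
  define DB where "DB = pdo_mult pdo_Delta B"
  have DBw: "pwf DB (1 + b)" unfolding DB_def pdo_Delta_E by (rule pwf_mult[OF pwf_E B])
  have DBe: "DB s m = B (s - 1) (m + 1) + (B s (m + 1) - B s m)" for s m
    unfolding DB_def by (rule DeltaL)
  have BCw: "pwf (pdo_mult B C) (b + c)" by (rule pwf_mult[OF B C])
  have fa: "fin (\<lambda>s. B s p * dm s C r' m)" for p r' m
    by (rule fin_pwf_low[OF B]) (use dm_zero[OF C] in auto)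
  have fb: "fin (\<lambda>s. B (s - 1) (n + 1) * dm s C r n)"
  proof (rule fin_int_box[of _ "r - c" "b + 1"])
    fix s assume h: "B (s - 1) (n + 1) * dm s C r n \<noteq> 0"
    then have "\<not> b < s - 1" using pwfD[OF B] by force
    moreover have "\<not> s < r - c" using h dm_zero[OF C] by force
    ultimately show "r - c \<le> s \<and> s \<le> b + 1" by simp
  qed
  have fc: "fin (\<lambda>s. B s (n + 1) * dm (s + 1) C r n)"
    by (rule fin_pwf_low[OF B, of "r - c - 1"]) (use dm_zero[OF C] in auto)
  have "pdo_mult DB C r n = fsum (\<lambda>s. DB s n * dm s C r n)"
    by (rule pdo_mult_dm[OF DBw C])
  also have "\<dots> = fsum (\<lambda>s. B (s - 1) (n + 1) * dm s C r n + (B s (n + 1) * dm s C r n - B s n * dm s C r n))"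
    by (rule fsum_cong) (simp add: DBe algebra_simps)
  also have "\<dots> = fsum (\<lambda>s. B (s - 1) (n + 1) * dm s C r n) + (fsum (\<lambda>s. B s (n + 1) * dm s C r n) - fsum (\<lambda>s. B s n * dm s C r n))"
    by (subst fsum_add[OF fb fin_diff[OF fa fa]]) (simp add: fsum_diff[OF fa fa])
  also have "fsum (\<lambda>s. B (s - 1) (n + 1) * dm s C r n) = fsum (\<lambda>s. B s (n + 1) * dm (s + 1) C r n)"
    using fsum_reindex_int[of "\<lambda>s. B (s - 1) (n + 1) * dm s C r n" 1] by simp
  finally have L: "pdo_mult DB C r n = fsum (\<lambda>s. B s (n + 1) * dm (s + 1) C r n) + (fsum (\<lambda>s. B s (n + 1) * dm s C r n) - fsum (\<lambda>s. B s n * dm s C r n))" .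
  have R: "pdo_mult pdo_Delta (pdo_mult B C) r n = fsum (\<lambda>s. B s (n + 1) * dm s C (r - 1) (n + 1)) + (fsum (\<lambda>s. B s (n + 1) * dm s C r (n + 1)) - fsum (\<lambda>s. B s n * dm s C r n))"
    unfolding DeltaL pdo_mult_dm[OF B C] ..
  have K: "fsum (\<lambda>s. B s (n + 1) * dm (s + 1) C r n) + fsum (\<lambda>s. B s (n + 1) * dm s C r n)
      = fsum (\<lambda>s. B s (n + 1) * dm s C (r - 1) (n + 1)) + fsum (\<lambda>s. B s (n + 1) * dm s C r (n + 1))"
  proof -
    have "fsum (\<lambda>s. B s (n + 1) * dm (s + 1) C r n) + fsum (\<lambda>s. B s (n + 1) * dm s C r n)
        = fsum (\<lambda>s. B s (n + 1) * dm (s + 1) C r n + B s (n + 1) * dm s C r n)"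
      by (rule fsum_add[symmetric, OF fc fa])
    also have "\<dots> = fsum (\<lambda>s. B s (n + 1) * dm s C (r - 1) (n + 1) + B s (n + 1) * dm s C r (n + 1))"
    proof (rule fsum_cong)
      fix s
      have "B s (n + 1) * dm (s + 1) C r n + B s (n + 1) * dm s C r n = B s (n + 1) * (dm (s + 1) C r n + dm s C r n)"
        by (simp add: distrib_left)
      also have "\<dots> = B s (n + 1) * (dm s C (r - 1) (n + 1) + dm s C r (n + 1))" by (simp only: dmP[OF C])
      finally show "B s (n + 1) * dm (s + 1) C r n + B s (n + 1) * dm s C r n = B s (n + 1) * dm s C (r - 1) (n + 1) + B s (n + 1) * dm s C r (n + 1)"
        by (simp add: distrib_left)
    qed
    also have "\<dots> = fsum (\<lambda>s. B s (n + 1) * dm s C (r - 1) (n + 1)) + fsum (\<lambda>s. B s (n + 1) * dm s C r (n + 1))"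
      by (rule fsum_add[OF fa fa])
    finally show ?thesis .
  qed
  show "pdo_mult DB C r n = pdo_mult pdo_Delta (pdo_mult B C) r n"
    unfolding L R using K by (simp add: algebra_simps)
qed

lemma M:
  fixes B C :: "('r::comm_ring_1) pdo"
  assumes B: "pwf B b" and C: "pwf C c"
  shows "pdo_mult (pdo_mult (E k) B) C = pdo_mult (E k) (pdo_mult B C)"
proof (induction k rule: int_induct[where k = 0])
  case base
  show ?case by (simp add: mult_E0_left)
next
  case (step1 k)
  have EE: "E (k + 1) = pdo_mult pdo_Delta (E k)"
    by (simp add: pdo_Delta_E E_mult_E add.commute)
  have w1: "pwf (pdo_mult (E k) B) (k + b)" by (rule pwf_mult[OF pwf_E B])
  have w2: "pwf (pdo_mult B C) (b + c)" by (rule pwf_mult[OF B C])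
  have "pdo_mult (pdo_mult (E (k + 1)) B) C = pdo_mult (pdo_mult (pdo_mult pdo_Delta (E k)) B) C"
    by (simp add: EE)
  also have "\<dots> = pdo_mult (pdo_mult pdo_Delta (pdo_mult (E k) B)) C"
    by (simp add: M1[OF pwf_E B])
  also have "\<dots> = pdo_mult pdo_Delta (pdo_mult (pdo_mult (E k) B) C)"
    by (rule M1[OF w1 C])
  also have "\<dots> = pdo_mult pdo_Delta (pdo_mult (E k) (pdo_mult B C))"
    by (simp add: step1)
  also have "\<dots> = pdo_mult (pdo_mult pdo_Delta (E k)) (pdo_mult B C)"
    by (simp add: M1[OF pwf_E w2])
  finally show ?case by (simp add: EE)
next
  case (step2 k)
  have EE: "E k = pdo_mult pdo_Delta (E (k - 1))"
    by (simp add: pdo_Delta_E E_mult_E)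
  have w1: "pwf (pdo_mult (E (k - 1)) B) (k - 1 + b)" by (rule pwf_mult[OF pwf_E B])
  have w2: "pwf (pdo_mult B C) (b + c)" by (rule pwf_mult[OF B C])
  have wX: "pwf (pdo_mult (pdo_mult (E (k - 1)) B) C) (k - 1 + b + c)" by (rule pwf_mult[OF w1 C])
  have wY: "pwf (pdo_mult (E (k - 1)) (pdo_mult B C)) (k - 1 + (b + c))" by (rule pwf_mult[OF pwf_E w2])
  have "pdo_mult pdo_Delta (pdo_mult (pdo_mult (E (k - 1)) B) C) = pdo_mult (pdo_mult pdo_Delta (pdo_mult (E (k - 1)) B)) C"
    by (rule M1[OF w1 C, symmetric])
  also have "\<dots> = pdo_mult (pdo_mult (E k) B) C"
    by (simp add: EE M1[OF pwf_E B])
  also have "\<dots> = pdo_mult (E k) (pdo_mult B C)" by (rule step2)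
  also have "\<dots> = pdo_mult pdo_Delta (pdo_mult (E (k - 1)) (pdo_mult B C))"
    by (simp add: EE M1[OF pwf_E w2])
  finally show ?case by (rule Delta_inj[OF wX wY])
qed

theorem pdo_assoc:
  fixes A B C :: "('r::comm_ring_1) pdo"
  assumes A: "pwf A a" and B: "pwf B b" and C: "pwf C c"
  shows "pdo_mult (pdo_mult A B) C = pdo_mult A (pdo_mult B C)"
proof (intro ext)
  fix r n
  have ABw: "pwf (pdo_mult A B) (a + b)" by (rule pwf_mult[OF A B])
  have BCw: "pwf (pdo_mult B C) (b + c)" by (rule pwf_mult[OF B C])
  have EBw: "pwf (pdo_mult (E k) B) (k + b)" for k by (rule pwf_mult[OF pwf_E B])
  have fin1: "fin (\<lambda>k. A k n * dm k B s n)" for s by (rule fin_mult_terms[OF A B])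
  have fin2: "fin (\<lambda>(s, k). A k n * dm k B s n * dm s C r n)"
  proof (rule fin_pairs_box[of "{r - c..a + b}" "{r - c - b..a}"])
    fix s k assume h: "A k n * dm k B s n * dm s C r n \<noteq> 0"
    then have "\<not> a < k" using pwfD[OF A] by force
    moreover have "\<not> k < s - b" using h dm_zero[OF B] by force
    moreover have "\<not> s < r - c" using h dm_zero[OF C] by force
    ultimately show "s \<in> {r - c..a + b} \<and> k \<in> {r - c - b..a}" by auto
  qed auto
  have fin3: "fin (\<lambda>s. dm k B s n * dm s C r n)" for k
  proof (rule fin_int_box[of _ "r - c" "k + b"])
    fix s assume h: "dm k B s n * dm s C r n \<noteq> 0"
    then have "\<not> k < s - b" using dm_zero[OF B] by force
    moreover have "\<not> s < r - c" using h dm_zero[OF C] by force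
    ultimately show "r - c \<le> s \<and> s \<le> k + b" by simp
  qed
  have "pdo_mult (pdo_mult A B) C r n = fsum (\<lambda>s. pdo_mult A B s n * dm s C r n)"
    by (rule pdo_mult_dm[OF ABw C])
  also have "\<dots> = fsum (\<lambda>s. fsum (\<lambda>k. A k n * dm k B s n * dm s C r n))"
    by (rule fsum_cong) (simp add: pdo_mult_dm[OF A B] fsum_multc[OF fin1])
  also have "\<dots> = fsum (\<lambda>k. fsum (\<lambda>s. A k n * dm k B s n * dm s C r n))"
    by (rule fsum_swap[OF fin2])
  also have "\<dots> = fsum (\<lambda>k. A k n * fsum (\<lambda>s. dm k B s n * dm s C r n))"
    by (rule fsum_cong) (simp add: fsum_cmult[OF fin3, symmetric] mult.assoc)
  also have "\<dots> = fsum (\<lambda>k. A k n * pdo_mult (pdo_mult (E k) B) C r n)"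
    by (rule fsum_cong) (simp add: pdo_mult_dm[OF EBw C] mult_E_left[OF B])
  also have "\<dots> = fsum (\<lambda>k. A k n * dm k (pdo_mult B C) r n)"
    by (rule fsum_cong) (simp add: M[OF B C] mult_E_left[OF BCw])
  also have "\<dots> = pdo_mult A (pdo_mult B C) r n"
    by (rule pdo_mult_dm[OF A BCw, symmetric])
  finally show "pdo_mult (pdo_mult A B) C r n = pdo_mult A (pdo_mult B C) r n" .
qed




lemma mult_add_left:
  fixes A A' B :: "('r::comm_ring_1) pdo"
  assumes A: "pwf A a" and A': "pwf A' a" and B: "pwf B b"
  shows "pdo_mult (\<lambda>j n. A j n + A' j n) B = (\<lambda>r n. pdo_mult A B r n + pdo_mult A' B r n)"
proof (intro ext)
  fix r n
  have S: "pwf (\<lambda>j n. A j n + A' j n) a" by (rule pwf_add[OF A A'])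
  show "pdo_mult (\<lambda>j n. A j n + A' j n) B r n = pdo_mult A B r n + pdo_mult A' B r n"
    unfolding pdo_mult_dm[OF S B] pdo_mult_dm[OF A B] pdo_mult_dm[OF A' B]
    by (subst fsum_add[symmetric, OF fin_mult_terms[OF A B] fin_mult_terms[OF A' B]])
       (simp add: distrib_right)
qed

lemma mult_neg_left:
  fixes A B :: "('r::comm_ring_1) pdo"
  assumes A: "pwf A a" and B: "pwf B b"
  shows "pdo_mult (\<lambda>j n. - A j n) B = (\<lambda>r n. - pdo_mult A B r n)"
proof (intro ext)
  fix r n
  have S: "pwf (\<lambda>j n. - A j n) a" by (rule pwf_neg[OF A])
  show "pdo_mult (\<lambda>j n. - A j n) B r n = - pdo_mult A B r n"
    unfolding pdo_mult_dm[OF S B] pdo_mult_dm[OF A B]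
    by (simp add: fsum_neg[symmetric])
qed

lemma mult_zero_left: "pdo_mult (\<lambda>j n. 0) B = (\<lambda>r n. (0::'r::comm_ring_1))"
  by (simp add: pdo_mult_def fsum_def case_prod_unfold)

lemma mult_sum_left:
  fixes A :: "'i \<Rightarrow> ('r::comm_ring_1) pdo"
  assumes I: "finite I" and A: "\<And>i. i \<in> I \<Longrightarrow> pwf (A i) a" and B: "pwf B b"
  shows "pdo_mult (\<lambda>j n. \<Sum>i\<in>I. A i j n) B = (\<lambda>r n. \<Sum>i\<in>I. pdo_mult (A i) B r n)"
  using I A
proof (induction I rule: finite_induct)
  case empty then show ?case by (simp add: mult_zero_left)
next
  case (insert x I)
  have "pdo_mult (\<lambda>j n. \<Sum>i\<in>insert x I. A i j n) B = pdo_mult (\<lambda>j n. A x j n + (\<Sum>i\<in>I. A i j n)) B"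
    using insert by simp
  also have "\<dots> = (\<lambda>r n. pdo_mult (A x) B r n + pdo_mult (\<lambda>j n. \<Sum>i\<in>I. A i j n) B r n)"
    by (rule mult_add_left[OF _ pwf_sum B]) (use insert in auto)
  finally show ?case using insert by simp
qed

lemma dm_add:
  fixes B B' :: "('r::comm_ring_1) pdo"
  assumes B: "pwf B b" and B': "pwf B' b"
  shows "dm k (\<lambda>j n. B j n + B' j n) r n = dm k B r n + dm k B' r n"
  unfolding dm_def
  by (subst fsum_add[symmetric, OF fin_dm_terms[OF B] fin_dm_terms[OF B']])
     (simp add: fdiff_add distrib_left)

lemma dm_neg:
  fixes B :: "('r::comm_ring_1) pdo"
  shows "dm k (\<lambda>j n. - B j n) r n = - dm k B r n"
  unfolding dm_def by (simp add: fdiff_neg fsum_neg[symmetric])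

lemma mult_add_right:
  fixes A B B' :: "('r::comm_ring_1) pdo"
  assumes A: "pwf A a" and B: "pwf B b" and B': "pwf B' b"
  shows "pdo_mult A (\<lambda>j n. B j n + B' j n) = (\<lambda>r n. pdo_mult A B r n + pdo_mult A B' r n)"
proof (intro ext)
  fix r n
  have S: "pwf (\<lambda>j n. B j n + B' j n) b" by (rule pwf_add[OF B B'])
  show "pdo_mult A (\<lambda>j n. B j n + B' j n) r n = pdo_mult A B r n + pdo_mult A B' r n"
    unfolding pdo_mult_dm[OF A S] pdo_mult_dm[OF A B] pdo_mult_dm[OF A B'] dm_add[OF B B']
    by (subst fsum_add[symmetric, OF fin_mult_terms[OF A B] fin_mult_terms[OF A B']])
       (simp add: distrib_left)
qed

lemma mult_neg_right:
  fixes A B :: "('r::comm_ring_1) pdo"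
  assumes A: "pwf A a" and B: "pwf B b"
  shows "pdo_mult A (\<lambda>j n. - B j n) = (\<lambda>r n. - pdo_mult A B r n)"
proof (intro ext)
  fix r n
  have S: "pwf (\<lambda>j n. - B j n) b" by (rule pwf_neg[OF B])
  show "pdo_mult A (\<lambda>j n. - B j n) r n = - pdo_mult A B r n"
    unfolding pdo_mult_dm[OF A S] pdo_mult_dm[OF A B] dm_neg
    by (simp add: fsum_neg[symmetric])
qed

lemma mult_zero_right: "pdo_mult A (\<lambda>j n. 0) = (\<lambda>r n. (0::'r::comm_ring_1))"
  by (simp add: pdo_mult_def fdiff_zero_fun fsum_def case_prod_unfold)

lemma mult_sum_right:
  fixes B :: "'i \<Rightarrow> ('r::comm_ring_1) pdo"
  assumes I: "finite I" and A: "pwf A a" and B: "\<And>i. i \<in> I \<Longrightarrow> pwf (B i) b"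
  shows "pdo_mult A (\<lambda>j n. \<Sum>i\<in>I. B i j n) = (\<lambda>r n. \<Sum>i\<in>I. pdo_mult A (B i) r n)"
  using I B
proof (induction I rule: finite_induct)
  case empty then show ?case by (simp add: mult_zero_right)
next
  case (insert x I)
  have "pdo_mult A (\<lambda>j n. \<Sum>i\<in>insert x I. B i j n) = pdo_mult A (\<lambda>j n. B x j n + (\<Sum>i\<in>I. B i j n))"
    using insert by simp
  also have "\<dots> = (\<lambda>r n. pdo_mult A (B x) r n + pdo_mult A (\<lambda>j n. \<Sum>i\<in>I. B i j n) r n)"
    by (rule mult_add_right[OF A _ pwf_sum]) (use insert in auto)
  finally show ?case using insert by simp
qed

context drv
begin

lemma dm_map:
  fixes B :: "'a pdo"
  assumes B: "pwf B b"
  shows "D (dm k B r n) = dm k (pdo_map D B) r n"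
  unfolding dm_def
  by (subst fsum[OF fin_dm_terms[OF B]]) (simp add: of_int_mult fdiff pdo_map_def)

lemma leibniz:
  fixes A B :: "'a pdo"
  assumes A: "pwf A a" and B: "pwf B b"
  shows "D (pdo_mult A B r n) = pdo_mult (pdo_map D A) B r n + pdo_mult A (pdo_map D B) r n"
proof -
  have A': "pwf (pdo_map D A) a" by (rule pwf_map[OF A]) simp
  have B': "pwf (pdo_map D B) b" by (rule pwf_map[OF B]) simp
  have "D (pdo_mult A B r n) = fsum (\<lambda>k. D (A k n * dm k B r n))"
    unfolding pdo_mult_dm[OF A B] by (rule fsum[OF fin_mult_terms[OF A B]])
  also have "\<dots> = fsum (\<lambda>k. pdo_map D A k n * dm k B r n + A k n * dm k (pdo_map D B) r n)"
    by (rule fsum_cong) (simp add: mult dm_map[OF B] pdo_map_def add.commute)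
  also have "\<dots> = pdo_mult (pdo_map D A) B r n + pdo_mult A (pdo_map D B) r n"
    unfolding pdo_mult_dm[OF A' B] pdo_mult_dm[OF A B']
    by (rule fsum_add[OF fin_mult_terms[OF A' B] fin_mult_terms[OF A B']])
  finally show ?thesis .
qed

end

definition shp :: "int \<Rightarrow> 'r pdo \<Rightarrow> 'r pdo" where
  "shp c A = (\<lambda>j n. A j (n + c))"

lemma shp_mult: "pdo_mult (shp c A) (shp c B) = shp c (pdo_mult A B)"
  unfolding shp_def pdo_mult_def
  by (intro ext fsum_cong) (auto simp: fdiff_shift algebra_simps)

lemma shp_E: "shp c (E k) = E k" by (simp add: shp_def E_def)
lemma shp_fn: "shp c (pdo_fn g) = pdo_fn (\<lambda>n. g (n + c))" by (simp add: shp_def pdo_fn_def)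
lemma pwf_shp: "pwf A a \<Longrightarrow> pwf (shp c A) a" by (simp add: pwf_def shp_def)

lemma Delta_fn:
  "pdo_mult pdo_Delta (pdo_fn (psi::'r::comm_ring_1 fn)) =
     (\<lambda>j n. pdo_mult (pdo_fn (shf 1 psi)) pdo_Delta j n + pdo_fn (fdiff 1 psi) j n)"
  by (intro ext) (simp only: DeltaL mult_fn_left, simp add: pdo_fn_def pdo_Delta_def shf_def)

lemma pdo_Dinv_Delta: "pdo_mult pdo_Dinv pdo_Delta = (pdo_one :: ('r::comm_ring_1) pdo)"
  by (simp add: pdo_Dinv_E pdo_Delta_E E_mult_E pdo_one_E)

lemma pdo_Delta_Dinv: "pdo_mult pdo_Delta pdo_Dinv = (pdo_one :: ('r::comm_ring_1) pdo)"
  by (simp add: pdo_Dinv_E pdo_Delta_E E_mult_E pdo_one_E)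

lemma pdo_map_one: assumes "drv D" shows "pdo_map D pdo_one = (\<lambda>j n. 0)"
  by (intro ext) (simp add: pdo_map_def pdo_one_def drv.one[OF assms] drv.zero[OF assms])





section \<open>Lower bounds of Laurent series\<close>

definition lb :: "('a::zero) fls \<Rightarrow> int \<Rightarrow> bool" where
  "lb f a \<longleftrightarrow> (\<forall>m<a. f $$ m = 0)"

lemma lbD: "lb f a \<Longrightarrow> m < a \<Longrightarrow> f $$ m = 0" by (simp add: lb_def)
lemma lb_mono: "lb f a \<Longrightarrow> b \<le> a \<Longrightarrow> lb f b" by (simp add: lb_def)
lemma lb_0[simp]: "lb 0 a" by (simp add: lb_def)
lemma lb_const: "lb (fls_const c) 0" by (simp add: lb_def)
lemma lb_one: "lb (1::'a::{zero,one} fls) 0" by (simp add: lb_def)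
lemma lb_of_int: "lb (of_int c :: 'a::ring_1 fls) 0" by (simp add: lb_def fls_of_int)
lemma lb_subdegree: "lb f (fls_subdegree f)" by (simp add: lb_def)
lemma lb_add: "lb f a \<Longrightarrow> lb g a \<Longrightarrow> lb (f + g) a" by (simp add: lb_def)
lemma lb_diff: "lb f a \<Longrightarrow> lb g a \<Longrightarrow> lb (f - (g::'a::ab_group_add fls)) a" by (simp add: lb_def)
lemma lb_neg: "lb f a \<Longrightarrow> lb (- (f::'a::ab_group_add fls)) a" by (simp add: lb_def)
lemma lb_sum: "(\<And>x. x \<in> I \<Longrightarrow> lb (f x) a) \<Longrightarrow> lb (\<Sum>x\<in>I. (f x :: 'a::comm_monoid_add fls)) a"
  by (simp add: lb_def fls_nth_sum)
lemma lb_fsum: "(\<And>x. lb (f x) a) \<Longrightarrow> lb (fsum (f :: 'b \<Rightarrow> 'a::comm_monoid_add fls)) a"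
  unfolding fsum_def by (rule lb_sum) auto

lemma lb_ge_subdegree: "f \<noteq> 0 \<Longrightarrow> lb f a \<Longrightarrow> a \<le> fls_subdegree f"
  by (rule fls_subdegree_geI) (auto simp: lb_def)

lemma lb_mult:
  fixes f g :: "'a::comm_ring_1 fls"
  assumes "lb f a" "lb g b"
  shows "lb (f * g) (a + b)"
proof (cases "f = 0 \<or> g = 0")
  case True then show ?thesis by auto
next
  case False
  then have "a \<le> fls_subdegree f" "b \<le> fls_subdegree g" using lb_ge_subdegree assms by auto
  then show ?thesis unfolding lb_def by (auto intro!: fls_times_nth_eq0)
qed

lemma lb_pow:
  fixes f :: "'a::comm_ring_1 fls"
  assumes "lb f a"
  shows "lb (f ^ k) (int k * a)"
proof (induction k)
  case 0 then show ?case by (simp add: lb_one)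
next
  case (Suc k)
  have "lb (f * f ^ k) (a + int k * a)" by (rule lb_mult[OF assms Suc])
  then show ?case by (simp add: algebra_simps)
qed

lemma X_inv_times_nth: "(fls_X_inv * f) $$ m = (f::'a::comm_ring_1 fls) $$ (m + 1)"
  by (simp add: fls_X_inv_times_conv_shift)

lemma times_nth_range:
  fixes f g :: "'a::comm_ring_1 fls"
  assumes "lb f a" "lb g b"
  shows "(f * g) $$ m = (\<Sum>i\<in>{a..m - b}. f $$ i * g $$ (m - i))"
proof (cases "f = 0 \<or> g = 0")
  case True
  then show ?thesis by auto
next
  case False
  define df where "df = fls_subdegree f"
  define dg where "dg = fls_subdegree g"
  have a: "a \<le> df" "b \<le> dg" using lb_ge_subdegree assms False by (auto simp: df_def dg_def)
  have "(f * g) $$ m = (\<Sum>i\<in>{df..m - dg}. f $$ i * g $$ (m - i))"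
    unfolding df_def dg_def by (rule fls_times_nth(2))
  also have "\<dots> = (\<Sum>i\<in>{a..m - b}. f $$ i * g $$ (m - i))"
  proof (rule sum.mono_neutral_left)
    show "{df..m - dg} \<subseteq> {a..m - b}" using a by auto
    show "\<forall>i\<in>{a..m - b} - {df..m - dg}. f $$ i * g $$ (m - i) = 0"
    proof
      fix i assume "i \<in> {a..m - b} - {df..m - dg}"
      then have "i < df \<or> m - i < dg" by auto
      then show "f $$ i * g $$ (m - i) = 0" by (auto simp: df_def dg_def)
    qed
  qed simp
  finally show ?thesis .
qed

lemma cmap_nth: "h 0 = 0 \<Longrightarrow> fls_cmap h f $$ m = h (f $$ m)"
  unfolding fls_cmap_def
  by (rule nth_Abs_fls_lower_bound[of "fls_subdegree f"]) auto

lemma lb_cmap: "h 0 = 0 \<Longrightarrow> lb f a \<Longrightarrow> lb (fls_cmap h f) a"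
  by (simp add: lb_def cmap_nth)

definition cst :: "('a::zero \<Rightarrow> 'a) \<Rightarrow> 'a fls \<Rightarrow> bool" where
  "cst D g \<longleftrightarrow> (\<forall>m. D (g $$ m) = 0)"

context drv
begin

lemma cmap_add: "fls_cmap D (f + g) = fls_cmap D f + fls_cmap D g"
  by (rule fls_eqI) (simp add: cmap_nth add)

lemma cmap_diff: "fls_cmap D (f - g) = fls_cmap D f - fls_cmap D g"
  by (rule fls_eqI) (simp add: cmap_nth diff)

lemma cmap_neg: "fls_cmap D (- f) = - fls_cmap D f"
  by (rule fls_eqI) (simp add: cmap_nth neg)

lemma cmap_sum: "fls_cmap D (\<Sum>x\<in>I. f x) = (\<Sum>x\<in>I. fls_cmap D (f x))"
  by (rule fls_eqI) (simp add: cmap_nth fls_nth_sum sum)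

lemma cmap_const_mult: "fls_cmap D (fls_const c * f) = fls_const (D c) * f + fls_const c * fls_cmap D f"
  by (rule fls_eqI) (simp add: cmap_nth mult)

lemma cmap_mult_cst:
  assumes "cst D g"
  shows "fls_cmap D (f * g) = fls_cmap D f * g"
proof (rule fls_eqI)
  fix m
  let ?a = "fls_subdegree f" and ?b = "fls_subdegree g"
  have l1: "lb (fls_cmap D f) ?a" by (rule lb_cmap[of D, OF zero lb_subdegree[of f]])
  have "fls_cmap D (f * g) $$ m = D (\<Sum>i\<in>{?a..m - ?b}. f $$ i * g $$ (m - i))"
    by (simp add: cmap_nth times_nth_range[OF lb_subdegree lb_subdegree])
  also have "\<dots> = (\<Sum>i\<in>{?a..m - ?b}. fls_cmap D f $$ i * g $$ (m - i))"
    using assms by (simp add: sum mult cmap_nth cst_def)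
  also have "\<dots> = (fls_cmap D f * g) $$ m"
    by (simp add: times_nth_range[OF l1 lb_subdegree])
  finally show "fls_cmap D (f * g) $$ m = (fls_cmap D f * g) $$ m" .
qed

lemma cst_mult: "cst D f \<Longrightarrow> cst D g \<Longrightarrow> cst D (f * g)"
  unfolding cst_def
  by (simp add: times_nth_range[OF lb_subdegree lb_subdegree] sum mult)

lemma cst_add: "cst D f \<Longrightarrow> cst D g \<Longrightarrow> cst D (f + g)"
  by (simp add: cst_def add)

lemma cst_one: "cst D 1"
  by (simp add: cst_def)

lemma cst_X_inv: "cst D fls_X_inv"
  by (simp add: cst_def)

lemma cst_pow: "cst D f \<Longrightarrow> cst D (f ^ k)"
  by (induction k) (simp_all add: cst_one cst_mult)

end

section \<open>The series (1+lambda)^n\<close>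

lemma qinv_nth: "(qinv :: 'a::comm_ring_1 fls) $$ m = (if 1 \<le> m then (-1) ^ nat (m - 1) else 0)"
  unfolding qinv_def by (rule nth_Abs_fls_lower_bound[of 1]) auto

lemma qinv_mult: "(1 + fls_X_inv) * (qinv :: 'a::comm_ring_1 fls) = 1"
proof (rule fls_eqI)
  fix m
  have "((1 + fls_X_inv) * (qinv :: 'a fls)) $$ m = qinv $$ m + qinv $$ (m + 1)"
    by (simp add: distrib_right X_inv_times_nth)
  also have "\<dots> = (1 :: 'a fls) $$ m"
  proof (cases "1 \<le> m")
    case True
    then have "nat m = Suc (nat (m - 1))" by simp
    then show ?thesis using True by (simp add: qinv_nth)
  next
    case False
    then show ?thesis by (cases "m = 0") (auto simp: qinv_nth)
  qed
  finally show "((1 + fls_X_inv) * (qinv :: 'a fls)) $$ m = (1 :: 'a fls) $$ m" .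
qed

lemma qpow_Suc: "qpow (n + 1) = (1 + fls_X_inv) * (qpow n :: 'a::comm_ring_1 fls)"
proof -
  consider "0 \<le> n" | "n = -1" | "n < -1" by linarith
  then show ?thesis
  proof cases
    case 1
    then have "nat (n + 1) = Suc (nat n)" by simp
    then show ?thesis using 1 by (simp add: qpow_def)
  next
    case 2
    then show ?thesis by (simp add: qpow_def qinv_mult)
  next
    case 3
    then have "nat (- n) = Suc (nat (- (n + 1)))" by simp
    then have "qpow n = qinv * (qpow (n + 1) :: 'a fls)" using 3 by (simp add: qpow_def)
    then show ?thesis by (simp add: mult.assoc[symmetric] qinv_mult)
  qed
qed

lemma lb_qpow: "lb (qpow n :: 'a::comm_ring_1 fls) (- n)"
proof (cases "0 \<le> n")
  case True
  have "lb (1 + fls_X_inv :: 'a fls) (-1)" by (simp add: lb_def)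
  then have "lb ((1 + fls_X_inv :: 'a fls) ^ nat n) (int (nat n) * (-1))" by (rule lb_pow)
  then show ?thesis using True by (simp add: qpow_def)
next
  case False
  have "lb (qinv :: 'a fls) 1" by (simp add: lb_def qinv_nth)
  then have "lb ((qinv :: 'a fls) ^ nat (- n)) (int (nat (- n)) * 1)" by (rule lb_pow)
  then show ?thesis using False by (simp add: qpow_def)
qed

lemma (in drv) cst_qpow: "cst D (qpow n)"
proof -
  have "cst D qinv"
  proof -
    have "D ((-1) ^ k) = 0" for k
    proof -
      show ?thesis using of_int[of "(-1) ^ k"] by simp
    qed
    then show ?thesis by (simp add: cst_def qinv_nth)
  qed
  then show ?thesis
    by (simp add: qpow_def cst_pow cst_add cst_one cst_X_inv)
qed

lemma sym_nth: "pwf P b \<Longrightarrow> pdo_sym P n $$ m = P (- m) n"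
  unfolding pdo_sym_def by (rule nth_Abs_fls_lower_bound[of "- b"]) (auto simp: pwf_def)

lemma lb_sym: "pwf P b \<Longrightarrow> lb (pdo_sym P n) (- b)"
  by (simp add: lb_def sym_nth pwf_def)

lemma sym_add:
  assumes P: "pwf P b" and Q: "pwf Q b"
  shows "pdo_sym (\<lambda>j n. P j n + Q j n) n = pdo_sym P n + (pdo_sym Q n :: 'a::comm_ring_1 fls)"
  by (rule fls_eqI) (simp add: sym_nth[OF P] sym_nth[OF Q] sym_nth[OF pwf_add[OF P Q]])

lemma sym_sum:
  fixes P :: "'i \<Rightarrow> ('a::comm_ring_1) pdo"
  assumes "finite I" "\<And>i. i \<in> I \<Longrightarrow> pwf (P i) b"
  shows "pdo_sym (\<lambda>j n. \<Sum>i\<in>I. P i j n) n = (\<Sum>i\<in>I. pdo_sym (P i) n)"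
proof -
  have w: "pwf (\<lambda>j n. \<Sum>i\<in>I. P i j n) b" by (rule pwf_sum) (rule assms(2))
  show ?thesis by (rule fls_eqI) (simp add: sym_nth[OF w] fls_nth_sum sym_nth[OF assms(2)])
qed

lemma sym_fn_mult:
  assumes P: "pwf P b"
  shows "pdo_sym (\<lambda>j n. g n * P j n) n = fls_const (g n) * (pdo_sym P n :: 'a::comm_ring_1 fls)"
proof -
  have w: "pwf (\<lambda>j n. g n * P j n) b" using P by (simp add: pwf_def)
  show ?thesis by (rule fls_eqI) (simp add: sym_nth[OF w] sym_nth[OF P])
qed

lemma (in drv) cmap_sym:
  assumes P: "pwf P b"
  shows "fls_cmap D (pdo_sym P n) = pdo_sym (pdo_map D P) n"
proof -
  have w: "pwf (pdo_map D P) b" by (rule pwf_map[of P b D, OF P zero])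
  show ?thesis by (rule fls_eqI) (simp only: cmap_nth[of D, OF zero] sym_nth[OF w] sym_nth[OF P], simp add: pdo_map_def)
qed

lemma L1:
  fixes M :: "('a::comm_ring_1) pdo"
  assumes M: "pwf M b"
  shows "pdo_sym M (n + 1) * qpow (n + 1) - pdo_sym M n * qpow n = pdo_sym (pdo_mult pdo_Delta M) n * qpow n"
proof -
  have DM: "pwf (pdo_mult pdo_Delta M) (1 + b)" unfolding pdo_Delta_E by (rule pwf_mult[OF pwf_E M])
  have B: "(1 + fls_X_inv) * pdo_sym M (n + 1) - pdo_sym M n = pdo_sym (pdo_mult pdo_Delta M) n"
    by (rule fls_eqI) (simp add: distrib_right X_inv_times_nth sym_nth[OF M] sym_nth[OF DM] DeltaL algebra_simps)
  have "pdo_sym M (n + 1) * qpow (n + 1) - pdo_sym M n * qpow n = ((1 + fls_X_inv) * pdo_sym M (n + 1) - pdo_sym M n) * qpow n"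
    unfolding qpow_Suc by (simp add: algebra_simps)
  then show ?thesis by (simp only: B)
qed

section \<open>Uniqueness of potentials\<close>

lemma const_fun:
  fixes C :: "int \<Rightarrow> 'b" and n p :: int
  assumes "\<And>n. C (n + 1) = (C n :: 'b)"
  shows "C n = C p"
proof -
  have up: "C (p + int k) = C p" for k
  proof (induction k)
    case 0 then show ?case by simp
  next
    case (Suc k)
    have "C (p + int (Suc k)) = C (p + int k + 1)" by (simp add: algebra_simps)
    also have "\<dots> = C (p + int k)" by (rule assms)
    finally show ?case using Suc by simp
  qed
  have down: "C (p - int k) = C p" for k
  proof (induction k)
    case 0 then show ?case by simp
  next
    case (Suc k)
    have "C (p - int (Suc k) + 1) = C (p - int (Suc k))" by (rule assms)
    then show ?case using Suc by simp
  qed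
  show ?thesis
  proof (cases "p \<le> n")
    case True then show ?thesis using up[of "nat (n - p)"] by simp
  next
    case False then show ?thesis using down[of "nat (p - n)"] by simp
  qed
qed

lemma uniq_minus:
  fixes C :: "int \<Rightarrow> 'a::zero fls"
  assumes "\<And>n. C (n + 1) = C n" "\<And>n. lb (C n) (c - n)"
  shows "C n = 0"
proof (rule fls_eqI)
  fix m
  have "C n = C (c - m - 1)" by (rule const_fun[of C, OF assms(1)])
  then show "C n $$ m = 0 $$ m" using assms(2)[of "c - m - 1"] by (simp add: lb_def)
qed

lemma uniq_plus:
  fixes C :: "int \<Rightarrow> 'a::zero fls"
  assumes "\<And>n. C (n + 1) = C n" "\<And>n. lb (C n) (n + c)"
  shows "C n = 0"
proof (rule fls_eqI)
  fix m
  have "C n = C (m - c + 1)" by (rule const_fun[of C, OF assms(1)])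
  then show "C n $$ m = 0 $$ m" using assms(2)[of "m - c + 1"] by (simp add: lb_def)
qed

lemma tder_lb:
  fixes S :: "'a::comm_ring_1 fls fn"
  assumes d0: "dt 1 0 = 0" and c: "c = 1 \<or> c = -1" and L: "lb (tder dt c 1 S n) a"
  shows "lb (S n) a"
proof (rule ccontr)
  assume "\<not> lb (S n) a"
  then obtain m where m: "m < a" "S n $$ m \<noteq> 0" by (auto simp: lb_def)
  then have nz: "S n \<noteq> 0" by auto
  define m0 where "m0 = fls_subdegree (S n)"
  have "m0 \<le> m" using m by (simp add: m0_def fls_subdegree_leI)
  have tt: "tder dt c 1 S n = fls_cmap (dt 1) (S n) + of_int c * (fls_X_intpow (-1) * S n)"
    by (simp add: tder_def mult.assoc)
  have "tder dt c 1 S n $$ (m0 - 1) = dt 1 (S n $$ (m0 - 1)) + of_int c * S n $$ m0"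
  proof -
    have "fls_X_intpow (-1) * S n = fls_shift 1 (S n)"
      using fls_X_intpow_times_conv_shift(1)[of "-1" "S n"] by simp
    moreover have cm: "fls_cmap (dt 1) (S n) $$ (m0 - 1) = dt 1 (S n $$ (m0 - 1))" by (rule cmap_nth[of "dt 1", OF d0])
    ultimately show ?thesis unfolding tt fls_plus_nth cm by (simp add: fls_of_int)
  qed
  also have "S n $$ (m0 - 1) = 0" by (simp add: m0_def)
  finally have "tder dt c 1 S n $$ (m0 - 1) = of_int c * S n $$ m0" using d0 by simp
  moreover have "S n $$ m0 \<noteq> 0" using nz by (simp add: m0_def)
  ultimately have "tder dt c 1 S n $$ (m0 - 1) \<noteq> 0" using c by auto
  moreover have "m0 - 1 < a" using \<open>m0 \<le> m\<close> m by simp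
  ultimately show False using L by (simp add: lb_def)
qed





section \<open>Support estimates for operators with series coefficients\<close>

definition pconst :: "('a::zero) fls pdo \<Rightarrow> bool" where
  "pconst A \<longleftrightarrow> (\<forall>k n. lb (A k n) 0)"

lemma fdiff_lb0: "(\<And>p. lb (f p) a) \<Longrightarrow> lb (fdiff i f p) (a::int)"
  by (induction i arbitrary: p) (auto intro: lb_diff)

lemma fdiff_lbm:
  fixes f :: "int \<Rightarrow> 'a::comm_ring_1 fls"
  assumes "\<And>p. lb (f p) (c - p)"
  shows "lb (fdiff i f p) (c - p - int i)"
proof (induction i arbitrary: p)
  case 0 then show ?case using assms by simp
next
  case (Suc i)
  have a: "lb (fdiff i f (p + 1)) (c - p - int (Suc i))"
    using Suc[of "p + 1"] by (simp add: algebra_simps)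
  have b: "lb (fdiff i f p) (c - p - int (Suc i))"
    by (rule lb_mono[OF Suc]) simp
  show ?case using lb_diff[OF a b] by simp
qed

lemma fdiff_lbp:
  fixes f :: "int \<Rightarrow> 'a::comm_ring_1 fls"
  assumes "\<And>p. lb (f p) (p + c)"
  shows "lb (fdiff i f p) (p + c)"
proof (induction i arbitrary: p)
  case 0 then show ?case using assms by simp
next
  case (Suc i)
  have a: "lb (fdiff i f (p + 1)) (p + c)"
    by (rule lb_mono[OF Suc[of "p + 1"]]) simp
  show ?case using lb_diff[OF a Suc[of p]] by simp
qed

lemma lb_term:
  fixes x y z :: "'a::comm_ring_1 fls"
  assumes "lb x a" "lb z c"
  shows "lb (x * of_int b * z) (a + c)"
  using lb_mult[OF lb_mult[OF assms(1) lb_of_int] assms(2)] by simp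

lemma S1:
  fixes A B :: "('a::comm_ring_1) fls pdo"
  assumes A: "pconst A" "pwf A K" and B: "\<And>j p. lb (B j p) (c - p)"
  shows "lb (pdo_mult A B r n) (c - K - n)"
  unfolding pdo_mult_def
proof (rule lb_fsum)
  fix x :: "int \<times> nat"
  obtain k i where x: "x = (k, i)" by (cases x)
  show "lb ((\<lambda>(k, i). A k n * of_int (ibinom k i) * fdiff i (B (r - k + int i)) (n + k - int i)) x) (c - K - n)"
  proof (cases "K < k")
    case True
    then show ?thesis using pwfD[OF A(2)] x by simp
  next
    case False
    have "lb (fdiff i (B (r - k + int i)) (n + k - int i)) (c - (n + k - int i) - int i)"
      by (rule fdiff_lbm) (rule B)
    then have "lb (A k n * of_int (ibinom k i) * fdiff i (B (r - k + int i)) (n + k - int i)) (0 + (c - (n + k - int i) - int i))"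
      by (rule lb_term[OF A(1)[unfolded pconst_def, rule_format]])
    then show ?thesis using False x by (auto elim: lb_mono)
  qed
qed

lemma S2:
  fixes A B :: "('a::comm_ring_1) fls pdo"
  assumes A: "\<And>k n. lb (A k n) (\<alpha> n)" and B: "pconst B"
  shows "lb (pdo_mult A B r n) (\<alpha> n)"
  unfolding pdo_mult_def
proof (rule lb_fsum)
  fix x :: "int \<times> nat"
  obtain k i where x: "x = (k, i)" by (cases x)
  have "lb (fdiff i (B (r - k + int i)) (n + k - int i)) 0"
    by (rule fdiff_lb0) (use B in \<open>simp add: pconst_def\<close>)
  then have "lb (A k n * of_int (ibinom k i) * fdiff i (B (r - k + int i)) (n + k - int i)) (\<alpha> n + 0)"
    by (rule lb_term[OF A])
  then show "lb ((\<lambda>(k, i). A k n * of_int (ibinom k i) * fdiff i (B (r - k + int i)) (n + k - int i)) x) (\<alpha> n)"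
    using x by simp
qed

lemma S3:
  fixes A B :: "('a::comm_ring_1) fls pdo"
  assumes "pconst A" "pconst B"
  shows "pconst (pdo_mult A B)"
  unfolding pconst_def using S2[of A "\<lambda>n. 0" B] assms by (auto simp: pconst_def)

lemma S4:
  fixes A B :: "('a::comm_ring_1) fls pdo"
  assumes A: "pconst A" and B: "\<And>j p. lb (B j p) (p + j + c)"
  shows "lb (pdo_mult A B r n) (n + r + c)"
  unfolding pdo_mult_def
proof (rule lb_fsum)
  fix x :: "int \<times> nat"
  obtain k i where x: "x = (k, i)" by (cases x)
  have "lb (fdiff i (B (r - k + int i)) (n + k - int i)) ((n + k - int i) + ((r - k + int i) + c))"
  proof (rule fdiff_lbp)
    fix p show "lb (B (r - k + int i) p) (p + ((r - k + int i) + c))"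
      using B[of "r - k + int i" p] by (simp add: add.assoc)
  qed
  then have "lb (A k n * of_int (ibinom k i) * fdiff i (B (r - k + int i)) (n + k - int i)) (0 + ((n + k - int i) + ((r - k + int i) + c)))"
    by (rule lb_term[OF A[unfolded pconst_def, rule_format]])
  then show "lb ((\<lambda>(k, i). A k n * of_int (ibinom k i) * fdiff i (B (r - k + int i)) (n + k - int i)) x) (n + r + c)"
    using x by (simp add: algebra_simps)
qed

lemma pconst_E: "pconst (E k)" by (simp add: pconst_def E_def lb_def)
lemma pconst_Gamma: "pconst pdo_Gamma" by (simp add: pconst_def pdo_Gamma_def lb_def)
lemma pconst_fn: "(\<And>n. lb (g n) 0) \<Longrightarrow> pconst (pdo_fn g)" by (simp add: pconst_def pdo_fn_def)
lemma pconst_map_const: "pconst (pdo_map fls_const L)" by (simp add: pconst_def pdo_map_def lb_const)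
lemma pconst_pos: "pconst A \<Longrightarrow> pconst (pdo_pos A)" by (simp add: pconst_def pdo_pos_def)
lemma pwf_pos: "pwf A a \<Longrightarrow> pwf (pdo_pos A) a" by (simp add: pwf_def pdo_pos_def)
lemma pwf_Gamma: "pwf pdo_Gamma 1" by (simp add: pwf_def pdo_Gamma_def)
lemma pdo_pow_1: "pdo_pow P 1 = (P :: ('r::comm_ring_1) pdo)"
  by (simp add: pdo_pow_def mult_one_right)





lemma fls_const_diff: "fls_const (a - b) = fls_const a - (fls_const b :: 'a::ab_group_add fls)"
  by (rule fls_eqI) simp

lemma fls_const_add: "fls_const (a + b) = fls_const a + (fls_const b :: 'a::comm_monoid_add fls)"
  by (rule fls_eqI) simp

lemma lb_wave: "pwf Z 0 \<Longrightarrow> lb (wave Z n) (- n)"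
  unfolding wave_def using lb_mult[OF lb_sym lb_qpow] by fastforce

lemma lb_res_minus:
  fixes L :: "'a::comm_ring_1 pdo" and F G :: "'a fls fn"
  assumes L: "pwf L l" and l: "0 \<le> l" and F: "\<And>n. lb (F n) (c - n)" and G: "\<And>n. lb (G n) 0"
  shows "lb (pdo_res (pdo_mult pdo_Gamma (pdo_mult pdo_Dinv (pdo_mult (pdo_fn G)
          (pdo_mult (pdo_pos (pdo_pow (pdo_map fls_const L) 1)) (pdo_mult (pdo_fn F) pdo_Dinv))))) n) (c - l - 1 - n)"
proof -
  let ?P = "pdo_pos (pdo_pow (pdo_map fls_const L) 1) :: 'a fls pdo"
  have Pc: "pconst ?P" unfolding pdo_pow_1 by (rule pconst_pos[OF pconst_map_const])
  have Pw: "pwf ?P l" unfolding pdo_pow_1 by (rule pwf_pos, rule pwf_map[OF L]) simp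
  have Dc: "pconst (pdo_Dinv :: 'a fls pdo)" by (simp add: pdo_Dinv_E pconst_E)
  have Dw: "pwf (pdo_Dinv :: 'a fls pdo) 0" unfolding pdo_Dinv_E by (rule pwf_mono[OF pwf_E]) simp
  let ?Y1 = "pdo_mult (pdo_fn F) pdo_Dinv"
  have Y1: "lb (?Y1 j p) (c - p)" for j p
    by (rule S2[OF _ Dc]) (simp add: pdo_fn_def F)
  let ?Y2 = "pdo_mult ?P ?Y1"
  have Y2: "lb (?Y2 j p) ((c - l) - p)" for j p
    by (rule S1[OF Pc Pw Y1])
  let ?Y3 = "pdo_mult (pdo_fn G) ?Y2"
  have Y3: "lb (?Y3 j p) ((c - l) - p)" for j p
  proof -
    have "lb (?Y3 j p) ((c - l) - 0 - p)" by (rule S1[OF pconst_fn[OF G] pwf_fn Y2])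
    then show ?thesis by simp
  qed
  let ?Y4 = "pdo_mult pdo_Dinv ?Y3"
  have Y4: "lb (?Y4 j p) ((c - l) - p)" for j p
  proof -
    have "lb (?Y4 j p) ((c - l) - 0 - p)" by (rule S1[OF Dc Dw Y3])
    then show ?thesis by simp
  qed
  have "lb (pdo_mult pdo_Gamma ?Y4 (-1) n) ((c - l) - 1 - n)"
    by (rule S1[OF pconst_Gamma pwf_Gamma Y4])
  then show ?thesis by (simp add: pdo_res_def)
qed

lemma concl1:
  fixes dt :: "nat \<Rightarrow> 'a::comm_ring_1 \<Rightarrow> 'a" and da :: "'a \<Rightarrow> 'a"
    and Z Zi L :: "'a pdo" and m :: nat
    and phi psi :: "nat \<Rightarrow> 'a fn"
    and S :: "nat \<Rightarrow> 'a fls fn"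
  assumes der_t1: "is_derivation (dt 1)" and der_a: "is_derivation da"
    and Z: "pwf Z 0" and Zi: "pwf Zi zi" and zi: "0 \<le> zi"
    and L_def: "L = pdo_mult Z (pdo_mult pdo_Delta Zi)"
    and flow_a: "pdo_map da Z = (\<lambda>j n. \<Sum>i<m.
       pdo_mult (pdo_fn (phi i)) (pdo_mult pdo_Dinv
         (pdo_mult (pdo_fn (shf 1 (psi i))) (pdo_mult pdo_Delta Z))) j n)"
    and S_sep: "\<And>i. i < m \<Longrightarrow>
       is_sep dt 1 L (wave Z) (\<lambda>n. fls_const (fdiff 1 (psi i) n)) (S i)"
  shows "fls_cmap da (wave Z n) =
            (\<Sum>i<m. fls_const (phi i n) * (wave Z n * fls_const (psi i n) - S i n))"
proof -
  interpret da: drv da by (rule drv.intro[OF der_a])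
  interpret dt1: drv "dt 1" by (rule drv.intro[OF der_t1])
  have Lw: "pwf L (1 + zi)" unfolding L_def pdo_Delta_E
    using pwf_mult[OF Z pwf_mult[OF pwf_E Zi]] by simp
  define V' where "V' i = pdo_mult pdo_Dinv (pdo_mult (pdo_fn (shf 1 (psi i))) (pdo_mult pdo_Delta Z))" for i
  have DZw: "pwf (pdo_mult pdo_Delta Z) (1 + 0)" unfolding pdo_Delta_E by (rule pwf_mult[OF pwf_E Z])
  have Nw: "pwf (pdo_mult (pdo_fn (shf 1 (psi i))) (pdo_mult pdo_Delta Z)) (0 + (1 + 0))" for i
    by (rule pwf_mult[OF pwf_fn DZw])
  have V'w: "pwf (V' i) (-1 + (0 + (1 + 0)))" for i
    unfolding V'_def pdo_Dinv_E by (rule pwf_mult[OF pwf_E Nw])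
  define V where "V i n = pdo_sym (V' i) n * qpow n" for i n
  define W where "W i n = fls_const (psi i n) * wave Z n - V i n" for i n
  have lbV: "lb (V i n) (- n)" for i n
    unfolding V_def using lb_mult[OF lb_sym[OF V'w] lb_qpow] by simp
  have dV: "V i (n + 1) - V i n = fls_const (psi i (n + 1)) * (wave Z (n + 1) - wave Z n)" for i n
  proof -
    have "V i (n + 1) - V i n = pdo_sym (pdo_mult pdo_Delta (V' i)) n * qpow n"
      unfolding V_def by (rule L1[OF V'w])
    also have "pdo_mult pdo_Delta (V' i) = pdo_mult (pdo_fn (shf 1 (psi i))) (pdo_mult pdo_Delta Z)"
      unfolding V'_def pdo_Delta_E pdo_Dinv_E
      by (simp add: pdo_assoc[OF pwf_E pwf_E Nw[unfolded pdo_Delta_E], symmetric] E_mult_E mult_E0_left)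
    also have "\<dots> = (\<lambda>j n. shf 1 (psi i) n * pdo_mult pdo_Delta Z j n)"
      by (intro ext) (simp add: mult_fn_left)
    also have "pdo_sym \<dots> n = fls_const (shf 1 (psi i) n) * pdo_sym (pdo_mult pdo_Delta Z) n"
      by (rule sym_fn_mult[OF DZw])
    also have "\<dots> * qpow n = fls_const (psi i (n + 1)) * (pdo_sym (pdo_mult pdo_Delta Z) n * qpow n)"
      by (simp add: shf_def mult.assoc)
    also have "pdo_sym (pdo_mult pdo_Delta Z) n * qpow n = wave Z (n + 1) - wave Z n"
      unfolding wave_def by (rule L1[OF Z, symmetric])
    finally show ?thesis .
  qed
  have SW: "S i n = W i n" if i: "i < m" for i n
  proof -
    have sep: "is_sep dt 1 L (wave Z) (\<lambda>n. fls_const (fdiff 1 (psi i) n)) (S i)" by (rule S_sep[OF i])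
    have dS: "S i (n + 1) - S i n = wave Z n * fls_const (psi i (n + 1) - psi i n)" for n
      using sep by (simp add: is_sep_def)
    have tS: "tder dt 1 1 (S i) = pdo_res (pdo_mult pdo_Gamma (pdo_mult pdo_Dinv (pdo_mult (pdo_fn (\<lambda>n. fls_const (fdiff 1 (psi i) n)))
          (pdo_mult (pdo_pos (pdo_pow (pdo_map fls_const L) 1)) (pdo_mult (pdo_fn (wave Z)) pdo_Dinv)))))"
      using sep by (simp add: is_sep_def)
    have lbS: "lb (S i n) (0 - (1 + zi) - 1 - n)" for n
    proof (rule tder_lb[of dt 1])
      show "dt 1 0 = 0" by (rule dt1.zero)
      show "lb (tder dt 1 1 (S i) n) (0 - (1 + zi) - 1 - n)"
        unfolding tS by (rule lb_res_minus[OF Lw]) (use zi lb_wave[OF Z] lb_const in auto)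
    qed simp
    define C where "C n = S i n - W i n" for n
    have "C (n + 1) = C n" for n
    proof -
      have "C (n + 1) - C n = (S i (n + 1) - S i n) - (W i (n + 1) - W i n)"
        by (simp add: C_def algebra_simps)
      also have "W i (n + 1) - W i n = wave Z n * fls_const (psi i (n + 1) - psi i n)"
      proof -
        have "W i (n + 1) - W i n = fls_const (psi i (n + 1)) * wave Z (n + 1) - fls_const (psi i n) * wave Z n
              - (V i (n + 1) - V i n)"
          by (simp add: W_def algebra_simps)
        also have "\<dots> = fls_const (psi i (n + 1)) * wave Z n - fls_const (psi i n) * wave Z n"
        proof -
          have Vs: "V i (n + 1) - V i n = fls_const (psi i (n + 1)) * (wave Z (n + 1) - wave Z n)" by (rule dV)
          show ?thesis by (simp only: Vs) (simp add: algebra_simps)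
        qed
        also have "\<dots> = wave Z n * fls_const (psi i (n + 1) - psi i n)"
          by (simp add: algebra_simps fls_const_diff)
        finally show ?thesis .
      qed
      finally show ?thesis by (simp add: dS)
    qed
    moreover have "lb (C n) (- (2 + zi) - n)" for n
    proof -
      have "lb (S i n) (- (2 + zi) - n)" using lbS[of n] by simp
      moreover have "lb (W i n) (- (2 + zi) - n)"
        unfolding W_def
        by (rule lb_diff; rule lb_mono) (use lb_mult[OF lb_const lb_wave[OF Z]] lbV zi in auto)
      ultimately show ?thesis unfolding C_def by (rule lb_diff)
    qed
    ultimately have "C n = 0" by (rule uniq_minus)
    then show ?thesis by (simp add: C_def)
  qed
  have Yw: "pwf (pdo_mult (pdo_fn (phi i)) (V' i)) (0 + (-1 + (0 + (1 + 0))))" for i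
    by (rule pwf_mult[OF pwf_fn V'w])
  have "fls_cmap da (wave Z n) = fls_cmap da (pdo_sym Z n) * qpow n"
    unfolding wave_def by (rule da.cmap_mult_cst[OF da.cst_qpow])
  also have "fls_cmap da (pdo_sym Z n) = pdo_sym (pdo_map da Z) n"
    by (rule da.cmap_sym[OF Z])
  also have "\<dots> = (\<Sum>i<m. pdo_sym (pdo_mult (pdo_fn (phi i)) (V' i)) n)"
    unfolding flow_a V'_def[symmetric] by (rule sym_sum) (use Yw in auto)
  also have "\<dots> = (\<Sum>i<m. fls_const (phi i n) * pdo_sym (V' i) n)"
  proof (rule sum.cong[OF refl])
    fix i
    have "pdo_mult (pdo_fn (phi i)) (V' i) = (\<lambda>j n. phi i n * V' i j n)"
      by (intro ext) (simp add: mult_fn_left)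
    then show "pdo_sym (pdo_mult (pdo_fn (phi i)) (V' i)) n = fls_const (phi i n) * pdo_sym (V' i) n"
      using sym_fn_mult[OF V'w] by simp
  qed
  also have "(\<Sum>i<m. fls_const (phi i n) * pdo_sym (V' i) n) * qpow n = (\<Sum>i<m. fls_const (phi i n) * V i n)"
    by (simp add: V_def sum_distrib_right mult.assoc)
  also have "\<dots> = (\<Sum>i<m. fls_const (phi i n) * (wave Z n * fls_const (psi i n) - S i n))"
    by (rule sum.cong[OF refl]) (simp add: SW W_def algebra_simps)
  finally show ?thesis .
qed





section \<open>Adjoint action\<close>

definition acoef :: "('a::comm_ring_1) pdo \<Rightarrow> int \<Rightarrow> int \<Rightarrow> 'a" where
  "acoef P n m = fsum (\<lambda>(j::int, i::nat).
       if int i - j = m then of_int (ibinom j i) * fdiffs i (P j) (n - j + int i) else 0)"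

definition ac :: "('a::comm_ring_1) pdo \<Rightarrow> int \<Rightarrow> int \<Rightarrow> int \<Rightarrow> 'a" where
  "ac P n m j = (if 0 \<le> m + j then of_int (ibinom j (nat (m + j))) * fdiffs (nat (m + j)) (P j) (n + m) else 0)"

lemma adj_acoef: "adj_exp_apply P n = Abs_fls (acoef P n) * qpow (- n)"
  by (simp add: adj_exp_apply_def acoef_def[abs_def])

lemma fdiffs_zero_pwf: "pwf P b \<Longrightarrow> b < j \<Longrightarrow> fdiffs i (P j) p = 0"
proof -
  assume "pwf P b" "b < j"
  then have "P j = (\<lambda>n. 0)" by (rule pwfD')
  then show ?thesis by (simp add: fdiffs_zero_fun)
qed

lemma fin_ac: "pwf P b \<Longrightarrow> fin (ac P n m)"
proof (rule fin_int_box[of _ "- m" b])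
  fix j assume P: "pwf P b" and h: "ac P n m j \<noteq> 0"
  then have "0 \<le> m + j" by (simp add: ac_def split: if_splits)
  moreover have "fdiffs (nat (m + j)) (P j) (n + m) \<noteq> 0" using h by (auto simp: ac_def split: if_splits)
  then have "\<not> b < j" using fdiffs_zero_pwf[OF P, of j "nat (m + j)" "n + m"] by auto
  ultimately show "- m \<le> j \<and> j \<le> b" by simp
qed

lemma acoef_ac:
  fixes P :: "('a::comm_ring_1) pdo"
  assumes P: "pwf P b"
  shows "acoef P n m = fsum (ac P n m)"
proof -
  let ?F = "\<lambda>(j::int) (i::nat). if int i - j = m then of_int (ibinom j i) * fdiffs i (P j) (n - j + int i) else (0::'a)"
  have fin2: "fin (\<lambda>(j,i). ?F j i)"
  proof (rule fin_pairs_box[of "{- m..b}" "{..nat (m + b)}"])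
    fix j i assume h: "?F j i \<noteq> 0"
    then have e: "int i - j = m" by (simp split: if_splits)
    from h have "fdiffs i (P j) (n - j + int i) \<noteq> 0" by (auto split: if_splits)
    then have "\<not> b < j" using fdiffs_zero_pwf[OF P, of j i] by auto
    then show "j \<in> {- m..b} \<and> i \<in> {..nat (m + b)}" using e by auto
  qed auto
  have "acoef P n m = fsum (\<lambda>j. fsum (\<lambda>i. ?F j i))"
    unfolding acoef_def by (rule fsum_pairs[OF fin2])
  also have "\<dots> = fsum (ac P n m)"
  proof (rule fsum_cong)
    fix j
    show "fsum (\<lambda>i. ?F j i) = ac P n m j"
    proof (cases "0 \<le> m + j")
      case True
      have "fsum (\<lambda>i. ?F j i) = ?F j (nat (m + j))"
        by (rule fsum_single) auto
      then show ?thesis using True by (simp add: ac_def)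
    next
      case False
      then have "?F j i = 0" for i by auto
      then show ?thesis using False by (simp add: ac_def)
    qed
  qed
  finally show ?thesis .
qed

lemma acoef_zero: "pwf P b \<Longrightarrow> m < - b \<Longrightarrow> acoef P n m = 0"
proof -
  assume P: "pwf P b" and m: "m < - b"
  have "ac P n m j = 0" for j
  proof (cases "b < j")
    case True then show ?thesis by (simp add: ac_def fdiffs_zero_pwf[OF P])
  next
    case False then show ?thesis using m by (simp add: ac_def)
  qed
  then have "ac P n m = (\<lambda>j. 0)" by (intro ext)
  then show ?thesis by (simp add: acoef_ac[OF P])
qed

lemma acoef_nth: "pwf P b \<Longrightarrow> Abs_fls (acoef P n) $$ m = acoef P n m"
  by (rule nth_Abs_fls_lower_bound[of "- b"]) (auto simp: acoef_zero)

lemma lb_adj: "pwf P b \<Longrightarrow> lb (adj_exp_apply P n) (n - b)"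
proof -
  assume P: "pwf P b"
  have "lb (Abs_fls (acoef P n)) (- b)" by (simp add: lb_def acoef_nth[OF P] acoef_zero[OF P])
  from lb_mult[OF this lb_qpow[of "- n"]] show ?thesis by (simp add: adj_acoef)
qed

lemma ac_add: "ac (\<lambda>j n. P j n + Q j n) n m j = ac P n m j + ac Q n m j"
  by (simp add: ac_def fdiffs_add distrib_left)

lemma ac_neg: "ac (\<lambda>j n. - P j n) n m j = - ac P n m j"
  by (simp add: ac_def fdiffs_neg)

lemma adj_add:
  fixes P Q :: "('a::comm_ring_1) pdo"
  assumes P: "pwf P b" and Q: "pwf Q b"
  shows "adj_exp_apply (\<lambda>j n. P j n + Q j n) n = adj_exp_apply P n + adj_exp_apply Q n"
proof -
  have PQ: "pwf (\<lambda>j n. P j n + Q j n) b" by (rule pwf_add[OF P Q])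
  have co: "acoef (\<lambda>j n. P j n + Q j n) n m = acoef P n m + acoef Q n m" for m
  proof -
    have "acoef (\<lambda>j n. P j n + Q j n) n m = fsum (\<lambda>j. ac P n m j + ac Q n m j)"
      unfolding acoef_ac[OF PQ] by (rule fsum_cong) (rule ac_add)
    also have "\<dots> = acoef P n m + acoef Q n m"
      unfolding acoef_ac[OF P] acoef_ac[OF Q] by (rule fsum_add[OF fin_ac[OF P] fin_ac[OF Q]])
    finally show ?thesis .
  qed
  have "Abs_fls (acoef (\<lambda>j n. P j n + Q j n) n) = Abs_fls (acoef P n) + Abs_fls (acoef Q n)"
    by (rule fls_eqI) (simp add: acoef_nth[OF P] acoef_nth[OF Q] acoef_nth[OF PQ] co)
  then show ?thesis by (simp add: adj_acoef distrib_right)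
qed

lemma adj_neg:
  fixes P :: "('a::comm_ring_1) pdo"
  assumes P: "pwf P b"
  shows "adj_exp_apply (\<lambda>j n. - P j n) n = - adj_exp_apply P n"
proof -
  have P': "pwf (\<lambda>j n. - P j n) b" by (rule pwf_neg[OF P])
  have co: "acoef (\<lambda>j n. - P j n) n m = - acoef P n m" for m
  proof -
    have "acoef (\<lambda>j n. - P j n) n m = fsum (\<lambda>j. - ac P n m j)"
      unfolding acoef_ac[OF P'] by (rule fsum_cong) (rule ac_neg)
    then show ?thesis unfolding acoef_ac[OF P] by (simp add: fsum_neg)
  qed
  have "Abs_fls (acoef (\<lambda>j n. - P j n) n) = - Abs_fls (acoef P n)"
    by (rule fls_eqI) (simp add: acoef_nth[OF P] acoef_nth[OF P'] co)
  then show ?thesis by (simp add: adj_acoef)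
qed

lemma adj_zero: "adj_exp_apply (\<lambda>j n. 0) n = (0 :: 'a::comm_ring_1 fls)"
proof -
  have "acoef (\<lambda>j n. 0 :: 'a) n = (\<lambda>m. 0)"
    by (intro ext) (simp add: acoef_def fdiffs_zero_fun fsum_def case_prod_unfold)
  moreover have "Abs_fls (\<lambda>m. 0 :: 'a) = 0"
    by (rule fls_eqI) (subst nth_Abs_fls_lower_bound[of 0]; simp)
  ultimately show ?thesis by (simp add: adj_acoef)
qed

lemma adj_sum:
  fixes P :: "'i \<Rightarrow> ('a::comm_ring_1) pdo"
  assumes I: "finite I" and P: "\<And>i. i \<in> I \<Longrightarrow> pwf (P i) b"
  shows "adj_exp_apply (\<lambda>j n. \<Sum>i\<in>I. P i j n) n = (\<Sum>i\<in>I. adj_exp_apply (P i) n)"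
  using I P
proof (induction I rule: finite_induct)
  case empty then show ?case by (simp add: adj_zero)
next
  case (insert x I)
  have "adj_exp_apply (\<lambda>j n. \<Sum>i\<in>insert x I. P i j n) n = adj_exp_apply (\<lambda>j n. P x j n + (\<Sum>i\<in>I. P i j n)) n"
    using insert by simp
  also have "\<dots> = adj_exp_apply (P x) n + adj_exp_apply (\<lambda>j n. \<Sum>i\<in>I. P i j n) n"
    by (rule adj_add) (use insert in \<open>auto intro: pwf_sum\<close>)
  finally show ?case using insert by simp
qed

lemma adj_diff:
  fixes P Q :: "('a::comm_ring_1) pdo"
  assumes P: "pwf P b" and Q: "pwf Q b"
  shows "adj_exp_apply (\<lambda>j n. P j n - Q j n) n = adj_exp_apply P n - adj_exp_apply Q n"
  using adj_add[OF P pwf_neg[OF Q]] adj_neg[OF Q] by simp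

lemma (in drv) cmap_adj:
  assumes P: "pwf P b"
  shows "fls_cmap D (adj_exp_apply P n) = adj_exp_apply (pdo_map D P) n"
proof -
  have P': "pwf (pdo_map D P) b" by (rule pwf_map[of P b D, OF P zero])
  have "fls_cmap D (Abs_fls (acoef P n)) = Abs_fls (acoef (pdo_map D P) n)"
  proof (rule fls_eqI)
    fix m
    have "D (fsum (ac P n m)) = fsum (\<lambda>j. D (ac P n m j))" by (rule fsum[OF fin_ac[OF P]])
    also have "\<dots> = fsum (ac (pdo_map D P) n m)"
      by (rule fsum_cong) (simp add: ac_def of_int_mult fdiffs pdo_map_def)
    finally show "fls_cmap D (Abs_fls (acoef P n)) $$ m = Abs_fls (acoef (pdo_map D P) n) $$ m"
      by (simp add: cmap_nth[of D, OF zero] acoef_nth[OF P] acoef_nth[OF P'] acoef_ac[OF P] acoef_ac[OF P'])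
  qed
  then show ?thesis
    unfolding adj_acoef by (simp add: cmap_mult_cst[OF cst_qpow])
qed

lemma ac_Delta:
  "ac (\<lambda>j n. P (j - 1) n) n m (j + 1) = ac P (n - 1) m j + ac P (n - 1) (m + 1) j - ac P n m j"
proof -
  consider "m + j < -1" | "m + j = -1" | "0 \<le> m + j" by linarith
  then show ?thesis
  proof cases
    case 1 then show ?thesis by (simp add: ac_def)
  next
    case 2 then show ?thesis by (simp add: ac_def algebra_simps)
  next
    case 3
    define t where "t = nat (m + j)"
    have mj: "m + j = int t" using 3 by (simp add: t_def)
    have mj2: "m + 1 + j = int (Suc t)" using 3 by (simp add: t_def)
    have mj3: "m + (j + 1) = int (Suc t)" using 3 by (simp add: t_def)
    have a1: "ac P (n - 1) m j = of_int (ibinom j t) * fdiffs t (P j) (n - 1 + m)"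
      by (simp add: ac_def mj)
    have a2: "ac P (n - 1) (m + 1) j = of_int (ibinom j (Suc t)) * fdiffs (Suc t) (P j) (n - 1 + (m + 1))"
      by (simp only: ac_def mj2 nat_int) simp
    have a3: "ac P n m j = of_int (ibinom j t) * fdiffs t (P j) (n + m)"
      by (simp add: ac_def mj)
    have a0: "ac (\<lambda>j n. P (j - 1) n) n m (j + 1) = of_int (ibinom (j + 1) (Suc t)) * fdiffs (Suc t) (P j) (n + m)"
      by (simp only: ac_def mj3 nat_int) simp
    have p1: "n - 1 + (m + 1) = n + m" "n - 1 + m = n + m - 1" by simp_all
    have fs: "fdiffs (Suc t) (P j) (n + m) = fdiffs t (P j) (n + m - 1) - fdiffs t (P j) (n + m)" by simp
    show ?thesis unfolding a0 a1 a2 a3 p1 ibinom_Pascal fs by (simp add: algebra_simps)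
  qed
qed

lemma adj_Delta:
  fixes P :: "('a::comm_ring_1) pdo"
  assumes P: "pwf P b"
  shows "adj_exp_apply (pdo_mult P pdo_Delta) n = adj_exp_apply P (n - 1) - adj_exp_apply P n"
proof -
  have e: "pdo_mult P pdo_Delta = (\<lambda>j n. P (j - 1) n)"
    by (intro ext) (simp add: pdo_Delta_E mult_E_right)
  have P1: "pwf (\<lambda>j n. P (j - 1) n) (b + 1)" using P by (simp add: pwf_def)
  have co: "acoef (\<lambda>j n. P (j - 1) n) n m = acoef P (n - 1) m + acoef P (n - 1) (m + 1) - acoef P n m" for m
  proof -
    have "acoef (\<lambda>j n. P (j - 1) n) n m = fsum (\<lambda>j. ac (\<lambda>j n. P (j - 1) n) n m (j + 1))"
      unfolding acoef_ac[OF P1] by (rule fsum_reindex_int[symmetric])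
    also have "\<dots> = fsum (\<lambda>j. ac P (n - 1) m j + ac P (n - 1) (m + 1) j - ac P n m j)"
      by (rule fsum_cong) (rule ac_Delta)
    also have "\<dots> = acoef P (n - 1) m + acoef P (n - 1) (m + 1) - acoef P n m"
      unfolding acoef_ac[OF P]
      by (simp add: fsum_diff[OF fin_add[OF fin_ac[OF P] fin_ac[OF P]] fin_ac[OF P]] fsum_add[OF fin_ac[OF P] fin_ac[OF P]])
    finally show ?thesis .
  qed
  have H: "Abs_fls (acoef (\<lambda>j n. P (j - 1) n) n) = (1 + fls_X_inv) * Abs_fls (acoef P (n - 1)) - Abs_fls (acoef P n)"
    by (rule fls_eqI) (simp add: acoef_nth[OF P] acoef_nth[OF P1] co distrib_right X_inv_times_nth algebra_simps)
  have Q: "qpow (- (n - 1)) = (1 + fls_X_inv) * (qpow (- n) :: 'a fls)"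
    using qpow_Suc[of "- n"] by simp
  have "Abs_fls (acoef (\<lambda>j n. P (j - 1) n) n) * qpow (- n) =
      Abs_fls (acoef P (n - 1)) * qpow (- (n - 1)) - Abs_fls (acoef P n) * qpow (- n)"
    unfolding H Q by (simp add: algebra_simps)
  then show ?thesis unfolding e adj_acoef .
qed





definition EE :: "('a::comm_ring_1) pdo \<Rightarrow> 'a fn \<Rightarrow> int \<Rightarrow> 'a fls" where
  "EE P psi n = adj_exp_apply (pdo_mult P (pdo_fn psi)) n - fls_const (psi n) * adj_exp_apply P n"

definition monop :: "('a::zero) fn \<Rightarrow> int \<Rightarrow> 'a pdo" where
  "monop g j = (\<lambda>k n. if k = j then g n else 0)"

lemma pwf_mono_op: "pwf (monop g j) j" by (simp add: pwf_def monop_def)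

lemma mono_Delta: "pdo_mult (monop g j) pdo_Delta = monop (g::'a::comm_ring_1 fn) (j + 1)"
  by (intro ext) (simp add: pdo_Delta_E mult_E_right monop_def)

lemma mono_0: "monop g 0 = pdo_fn g" by (simp add: monop_def pdo_fn_def)

lemma adj_fn_op: "adj_exp_apply (pdo_fn (h::'a::comm_ring_1 fn)) n = fls_const (h n) * qpow (- n)"
proof -
  have co: "acoef (pdo_fn h) n m = (if m = 0 then h n else 0)" for m
  proof -
    have "acoef (pdo_fn h) n m = ac (pdo_fn h) n m 0"
      unfolding acoef_ac[OF pwf_fn] by (rule fsum_single) (simp add: ac_def pdo_fn_def fdiffs_zero_fun)
    also have "\<dots> = (if m = 0 then h n else 0)"
      by (cases "0 \<le> m") (auto simp: ac_def pdo_fn_def ibinom_0_left)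
    finally show ?thesis .
  qed
  have "Abs_fls (acoef (pdo_fn h) n) = fls_const (h n)"
    by (rule fls_eqI) (simp add: acoef_nth[OF pwf_fn] co)
  then show ?thesis by (simp add: adj_acoef)
qed

lemma EE_fn: "EE (pdo_fn g) psi n = (0 :: 'a::comm_ring_1 fls)"
proof -
  have "pdo_mult (pdo_fn g) (pdo_fn psi) = pdo_fn (\<lambda>n. g n * psi n)"
    by (intro ext) (simp only: mult_fn_left, simp add: pdo_fn_def)
  then show ?thesis by (simp add: EE_def adj_fn_op algebra_simps)
qed

lemma lb_EE:
  fixes A :: "('a::comm_ring_1) pdo"
  assumes "pwf A a"
  shows "lb (EE A psi n) (n - a)"
proof -
  have w: "pwf (pdo_mult A (pdo_fn psi)) (a + 0)" by (rule pwf_mult[OF assms pwf_fn])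
  have l1: "lb (adj_exp_apply (pdo_mult A (pdo_fn psi)) n) (n - a)" using lb_adj[OF w, of n] by simp
  have l2: "lb (fls_const (psi n) * adj_exp_apply A n) (n - a)" using lb_mult[OF lb_const lb_adj[OF assms]] by simp
  show ?thesis unfolding EE_def by (rule lb_diff[OF l1 l2])
qed

lemma EE_add:
  fixes A B :: "('a::comm_ring_1) pdo"
  assumes A: "pwf A a" and B: "pwf B a"
  shows "EE (\<lambda>j n. A j n + B j n) psi n = EE A psi n + EE B psi n"
proof -
  have wA: "pwf (pdo_mult A (pdo_fn psi)) a" using pwf_mult[OF A pwf_fn] by simp
  have wB: "pwf (pdo_mult B (pdo_fn psi)) a" using pwf_mult[OF B pwf_fn] by simp
  show ?thesis
    unfolding EE_def mult_add_left[OF A B pwf_fn] adj_add[OF wA wB] adj_add[OF A B]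
    by (simp add: algebra_simps)
qed

lemma EE_zero: "EE (\<lambda>j n. 0) psi n = (0 :: 'a::comm_ring_1 fls)"
  by (simp add: EE_def mult_zero_left adj_zero)

lemma EE_sum:
  fixes A :: "'i \<Rightarrow> ('a::comm_ring_1) pdo"
  assumes I: "finite I" and A: "\<And>i. i \<in> I \<Longrightarrow> pwf (A i) a"
  shows "EE (\<lambda>j n. \<Sum>i\<in>I. A i j n) psi n = (\<Sum>i\<in>I. EE (A i) psi n)"
  using I A
proof (induction I rule: finite_induct)
  case empty then show ?case by (simp add: EE_zero)
next
  case (insert x I)
  have "EE (\<lambda>j n. \<Sum>i\<in>insert x I. A i j n) psi n = EE (\<lambda>j n. A x j n + (\<Sum>i\<in>I. A i j n)) psi n"
    using insert by simp
  also have "\<dots> = EE (A x) psi n + EE (\<lambda>j n. \<Sum>i\<in>I. A i j n) psi n"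
    by (rule EE_add) (use insert in \<open>auto intro: pwf_sum\<close>)
  finally show ?case using insert by simp
qed

lemma EE_rel:
  fixes P :: "('a::comm_ring_1) pdo"
  assumes P: "pwf P b"
  shows "EE (pdo_mult P pdo_Delta) psi n = EE P (shf 1 psi) (n - 1) - EE P (shf 1 psi) n + EE P (fdiff 1 psi) n"
proof -
  have D1: "pwf (pdo_Delta :: 'a pdo) 1" by (simp add: pdo_Delta_E pwf_E)
  have G1: "pwf (pdo_mult (pdo_fn (shf 1 psi)) pdo_Delta) 1" using pwf_mult[OF pwf_fn D1] by simp
  have H1: "pwf (pdo_fn (fdiff 1 psi)) 1" by (rule pwf_mono[OF pwf_fn]) simp
  have wG: "pwf (pdo_mult P (pdo_fn (shf 1 psi))) b" using pwf_mult[OF P pwf_fn] by simp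
  have wGD: "pwf (pdo_mult (pdo_mult P (pdo_fn (shf 1 psi))) pdo_Delta) (b + 1)" by (rule pwf_mult[OF wG D1])
  have wH: "pwf (pdo_mult P (pdo_fn (fdiff 1 psi))) (b + 1)" using pwf_mult[OF P H1] by simp
  have "pdo_mult (pdo_mult P pdo_Delta) (pdo_fn psi) = pdo_mult P (pdo_mult pdo_Delta (pdo_fn psi))"
    by (rule pdo_assoc[OF P D1 pwf_fn])
  also have "\<dots> = (\<lambda>r n. pdo_mult P (pdo_mult (pdo_fn (shf 1 psi)) pdo_Delta) r n + pdo_mult P (pdo_fn (fdiff 1 psi)) r n)"
    unfolding Delta_fn by (rule mult_add_right[OF P G1 H1])
  also have "pdo_mult P (pdo_mult (pdo_fn (shf 1 psi)) pdo_Delta) = pdo_mult (pdo_mult P (pdo_fn (shf 1 psi))) pdo_Delta"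
    by (rule pdo_assoc[OF P pwf_fn D1, symmetric])
  finally have e: "pdo_mult (pdo_mult P pdo_Delta) (pdo_fn psi) =
      (\<lambda>r n. pdo_mult (pdo_mult P (pdo_fn (shf 1 psi))) pdo_Delta r n + pdo_mult P (pdo_fn (fdiff 1 psi)) r n)" .
  have A1: "adj_exp_apply (pdo_mult (pdo_mult P pdo_Delta) (pdo_fn psi)) n =
      adj_exp_apply (pdo_mult P (pdo_fn (shf 1 psi))) (n - 1) - adj_exp_apply (pdo_mult P (pdo_fn (shf 1 psi))) n
      + adj_exp_apply (pdo_mult P (pdo_fn (fdiff 1 psi))) n"
    unfolding e adj_add[OF wGD wH] adj_Delta[OF wG] ..
  have A2: "adj_exp_apply (pdo_mult P pdo_Delta) n = adj_exp_apply P (n - 1) - adj_exp_apply P n"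
    by (rule adj_Delta[OF P])
  have c1: "shf 1 psi (n - 1) = psi n" "shf 1 psi n = psi (n + 1)" "fdiff 1 psi n = psi (n + 1) - psi n"
    by (simp_all add: shf_def)
  show ?thesis
    unfolding EE_def A1 A2 c1 fls_const_diff by (simp add: algebra_simps)
qed

lemma EE_mono: "EE (monop g j) psi n = (0 :: 'a::comm_ring_1 fls)"
proof (induction j arbitrary: g psi n rule: int_induct[where k = 0])
  case base
  show ?case by (simp add: mono_0 EE_fn)
next
  case (step1 j)
  have "EE (monop g (j + 1)) psi n = EE (pdo_mult (monop g j) pdo_Delta) psi n" by (simp add: mono_Delta)
  also have "\<dots> = 0" by (simp add: EE_rel[OF pwf_mono_op] step1)
  finally show ?case .
next
  case (step2 j)
  let ?P = "monop g (j - 1)"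
  have PD: "pdo_mult ?P pdo_Delta = monop g j" using mono_Delta[of g "j - 1"] by simp
  have main: "\<forall>h n. lb (EE ?P h n) (n - (j - 1) + int d)" for d
  proof (induction d)
    case 0 show ?case
    proof (intro allI)
      fix h n show "lb (EE ?P h n) (n - (j - 1) + int 0)"
        using lb_EE[OF pwf_mono_op[of g "j - 1"], of h n] by simp
    qed
  next
    case (Suc d)
    show ?case
    proof (intro allI)
      fix h :: "'a fn" and n :: int
      define psi where "psi = shf (-1) h"
      have sh: "shf 1 psi = h" by (simp add: psi_def shf_def)
      have "EE (pdo_mult ?P pdo_Delta) psi (n + 1) = EE ?P h n - EE ?P h (n + 1) + EE ?P (fdiff 1 psi) (n + 1)"
        using EE_rel[OF pwf_mono_op, of g "j - 1" psi "n + 1"] by (simp add: sh)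
      moreover have "EE (pdo_mult ?P pdo_Delta) psi (n + 1) = 0" by (simp add: PD step2)
      ultimately have eqn: "EE ?P h n = EE ?P h (n + 1) - EE ?P (fdiff 1 psi) (n + 1)"
        by (simp add: algebra_simps)
      have lbX:  "lb (EE ?P h (n + 1) - EE ?P (fdiff 1 psi) (n + 1)) (n + 1 - (j - 1) + int d)"
      proof -
        have s1: "lb (EE ?P h (n + 1)) (n + 1 - (j - 1) + int d)" using Suc by blast
        have s2: "lb (EE ?P (fdiff 1 psi) (n + 1)) (n + 1 - (j - 1) + int d)" using Suc by blast
        show ?thesis by (rule lb_diff[OF s1 s2])
      qed
      have "lb (EE ?P h n) (n + 1 - (j - 1) + int d)" unfolding eqn by (rule lbX)
      then show "lb (EE ?P h n) (n - (j - 1) + int (Suc d))" by (rule lb_mono) simp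
    qed
  qed
  show ?case
  proof (rule fls_eqI)
    fix m
    have "lb (EE ?P psi n) (n - (j - 1) + int (nat (m - n + j + 1)))" using main by blast
    then show "EE ?P psi n $$ m = 0 $$ m" by (simp add: lb_def)
  qed
qed

lemma adj_fn:
  fixes P :: "('a::comm_ring_1) pdo"
  assumes P: "pwf P b"
  shows "adj_exp_apply (pdo_mult P (pdo_fn psi)) n = fls_const (psi n) * adj_exp_apply P n"
proof -
  have "EE P psi n = 0"
  proof (rule fls_eqI)
    fix m
    define M :: int where "M = max 0 (m - n)"
    define PM where "PM = (\<lambda>j n. \<Sum>i\<in>{- M..b}. monop (P i) i j n)"
    define QM where "QM = (\<lambda>j n. if - M \<le> j then 0 else P j n)"
    have PMw: "pwf PM b" unfolding PM_def
      by (rule pwf_sum) (rule pwf_mono[OF pwf_mono_op], simp)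
    have QMw: "pwf QM b" using P by (simp add: QM_def pwf_def)
    have QMw': "pwf QM (- M - 1)" by (simp add: QM_def pwf_def)
    have split: "P = (\<lambda>j n. PM j n + QM j n)"
    proof (intro ext)
      fix j k
      show "P j k = PM j k + QM j k"
      proof (cases "- M \<le> j")
        case True
        show ?thesis
        proof (cases "j \<le> b")
          case True
          have "PM j k = (\<Sum>i\<in>{- M..b}. if i = j then P j k else 0)"
            by (simp add: PM_def monop_def)
          also have "\<dots> = P j k" using True \<open>- M \<le> j\<close> by (simp add: sum.delta)
          finally show ?thesis using \<open>- M \<le> j\<close> by (simp add: QM_def)
        next
          case False
          then have "PM j k = 0" by (simp add: PM_def monop_def)
          then show ?thesis using False pwfD[OF P] by (simp add: QM_def)
        qed
      next
        case False
        then have "PM j k = 0" by (simp add: PM_def monop_def)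
        then show ?thesis using False by (simp add: QM_def)
      qed
    qed
    have "EE PM psi n = 0"
      unfolding PM_def by (subst EE_sum) (auto intro: pwf_mono[OF pwf_mono_op] simp: EE_mono)
    then have "EE P psi n = EE QM psi n"
      by (subst split) (simp add: EE_add[OF PMw QMw])
    moreover have "lb (EE QM psi n) (n - (- M - 1))" by (rule lb_EE[OF QMw'])
    ultimately show "EE P psi n $$ m = 0 $$ m" by (simp add: lb_def M_def)
  qed
  then show ?thesis by (simp add: EE_def)
qed





lemma assoc_wf:
  fixes A B C :: "('r::comm_ring_1) pdo"
  shows "pdo_wf A \<Longrightarrow> pdo_wf B \<Longrightarrow> pdo_wf C \<Longrightarrow> pdo_mult (pdo_mult A B) C = pdo_mult A (pdo_mult B C)"
  unfolding pdo_wf_pwf using pdo_assoc by blast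

lemma wf_E[simp]: "pdo_wf (E k :: ('r::comm_ring_1) pdo)" unfolding pdo_wf_pwf using pwf_E by blast
lemma wf_fn[simp]: "pdo_wf (pdo_fn g :: ('r::comm_ring_1) pdo)" unfolding pdo_wf_pwf using pwf_fn by blast
lemma wf_Delta[simp]: "pdo_wf (pdo_Delta :: ('r::comm_ring_1) pdo)" by (simp add: pdo_Delta_E)
lemma wf_Dinv[simp]: "pdo_wf (pdo_Dinv :: ('r::comm_ring_1) pdo)" by (simp add: pdo_Dinv_E)
lemma wf_one[simp]: "pdo_wf (pdo_one :: ('r::comm_ring_1) pdo)" by (simp add: pdo_one_E)
lemma wf_mult[simp]: "pdo_wf A \<Longrightarrow> pdo_wf B \<Longrightarrow> pdo_wf (pdo_mult A (B :: ('r::comm_ring_1) pdo))"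
  by (rule pdo_wf_mult)

lemma lb_res_plus:
  fixes L :: "'a::comm_ring_1 pdo" and G :: "'a fls fn" and phi :: "'a fn"
  assumes L: "pwf L l" and G: "\<And>n. lb (G n) (n + g0)"
  shows "lb (pdo_res (pdo_mult pdo_Gamma (pdo_mult pdo_Dinv (pdo_mult (pdo_fn G)
          (pdo_mult (pdo_pos (pdo_pow (pdo_map fls_const L) 1)) (pdo_mult (pdo_fn (\<lambda>n. fls_const (phi n))) pdo_Dinv))))) n)
          (n - 1 + (g0 - (l - 1)))"
proof -
  let ?P = "pdo_pos (pdo_pow (pdo_map fls_const L) 1) :: 'a fls pdo"
  have Pc: "pconst ?P" unfolding pdo_pow_1 by (rule pconst_pos[OF pconst_map_const])
  have Pw: "pwf ?P l" unfolding pdo_pow_1 by (rule pwf_pos, rule pwf_map[OF L]) simp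
  have Dc: "pconst (pdo_Dinv :: 'a fls pdo)" by (simp add: pdo_Dinv_E pconst_E)
  have Dw: "pwf (pdo_Dinv :: 'a fls pdo) (-1)" unfolding pdo_Dinv_E by (rule pwf_E)
  let ?Y1 = "pdo_mult (pdo_fn (\<lambda>n. fls_const (phi n))) pdo_Dinv"
  have Y1c: "pconst ?Y1" by (rule S3[OF pconst_fn[OF lb_const] Dc])
  have Y1w: "pwf ?Y1 (0 + -1)" by (rule pwf_mult[OF pwf_fn Dw])
  let ?Y2 = "pdo_mult ?P ?Y1"
  have Y2c: "pconst ?Y2" by (rule S3[OF Pc Y1c])
  have Y2w: "pwf ?Y2 (l + (0 + -1))" by (rule pwf_mult[OF Pw Y1w])
  let ?Y3 = "pdo_mult (pdo_fn G) ?Y2"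
  have Y3: "lb (?Y3 j p) (p + j + (g0 - (l - 1)))" for j p
  proof (cases "l - 1 < j")
    case True
    then have "?Y2 j p = 0" using pwfD[OF Y2w] by simp
    then show ?thesis by (simp add: mult_fn_left)
  next
    case False
    have "lb (G p * ?Y2 j p) (p + g0 + 0)"
      by (rule lb_mult[OF G]) (use Y2c in \<open>simp add: pconst_def\<close>)
    moreover have "p + j + (g0 - (l - 1)) \<le> p + g0 + 0" using False by simp
    ultimately have "lb (G p * ?Y2 j p) (p + j + (g0 - (l - 1)))" by (rule lb_mono)
    then show ?thesis by (simp add: mult_fn_left)
  qed
  let ?Y4 = "pdo_mult pdo_Dinv ?Y3"
  have Y4: "lb (?Y4 r p) (p + r + (g0 - (l - 1)))" for r p
    by (rule S4[OF Dc Y3])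
  have "lb (pdo_mult pdo_Gamma ?Y4 (-1) n) (n + -1 + (g0 - (l - 1)))"
    by (rule S4[OF pconst_Gamma Y4])
  then show ?thesis by (simp add: pdo_res_def)
qed

lemma concl2:
  fixes dt :: "nat \<Rightarrow> 'a::comm_ring_1 \<Rightarrow> 'a" and da :: "'a \<Rightarrow> 'a"
    and Z Zi L :: "'a pdo" and m :: nat
    and phi psi :: "nat \<Rightarrow> 'a fn"
    and T :: "nat \<Rightarrow> 'a fls fn"
  assumes der_t1: "is_derivation (dt 1)" and der_a: "is_derivation da"
    and Z: "pwf Z z" and z: "0 \<le> z" and Zi: "pwf Zi zi" and zi: "0 \<le> zi"
    and Z_inv1: "pdo_mult Z Zi = pdo_one" and Z_inv2: "pdo_mult Zi Z = pdo_one"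
    and L_def: "L = pdo_mult Z (pdo_mult pdo_Delta Zi)"
    and flow_a: "pdo_map da Z = (\<lambda>j n. \<Sum>i<m.
       pdo_mult (pdo_fn (phi i)) (pdo_mult pdo_Dinv
         (pdo_mult (pdo_fn (shf 1 (psi i))) (pdo_mult pdo_Delta Z))) j n)"
    and T_sep: "\<And>i. i < m \<Longrightarrow>
       is_sep dt (-1) L (\<lambda>n. fls_const (phi i n)) (fdiff 1 (wave_adj Zi)) (T i)"
  shows "fls_cmap da (wave_adj Zi n) = - (\<Sum>i<m. fls_const (psi i n) * T i n)"
proof -
  interpret da: drv da by (rule drv.intro[OF der_a])
  interpret dt1: drv "dt 1" by (rule drv.intro[OF der_t1])
  have wZ: "pdo_wf Z" using Z by (auto simp: pdo_wf_pwf)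
  have wZi: "pdo_wf Zi" using Zi by (auto simp: pdo_wf_pwf)
  have Dw: "pwf (pdo_Delta :: 'a pdo) 1" by (simp add: pdo_Delta_E pwf_E)
  have Dinvw: "pwf (pdo_Dinv :: 'a pdo) (-1)" by (simp add: pdo_Dinv_E pwf_E)
  have Lw: "pwf L (z + (1 + zi))" unfolding L_def by (rule pwf_mult[OF Z pwf_mult[OF Dw Zi]])
  define Q0 where "Q0 = shp (-1) (pdo_mult Zi pdo_Dinv)"
  have wadj: "wave_adj Zi = adj_exp_apply Q0"
  proof -
    have "(\<lambda>j. shf (-1) (Zi (j + 1))) = Q0"
      by (intro ext) (simp add: Q0_def shp_def shf_def pdo_Dinv_E mult_E_right)
    then show ?thesis by (simp add: wave_adj_def)
  qed
  have Q0w: "pwf Q0 (zi + -1)" unfolding Q0_def by (rule pwf_shp[OF pwf_mult[OF Zi Dinvw]])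
  define X where "X = pdo_map da Zi"
  have Xw: "pwf X zi" unfolding X_def by (rule pwf_map[of Zi zi da, OF Zi da.zero])
  define Y where "Y i = pdo_mult (pdo_fn (phi i)) (pdo_mult pdo_Dinv (pdo_mult (pdo_fn (shf 1 (psi i))) (pdo_mult pdo_Delta Z)))" for i
  have Yw: "pwf (Y i) z" for i
  proof -
    have "pwf (Y i) (0 + (-1 + (0 + (1 + z))))" unfolding Y_def
      by (rule pwf_mult[OF pwf_fn pwf_mult[OF Dinvw pwf_mult[OF pwf_fn pwf_mult[OF Dw Z]]]])
    then show ?thesis by simp
  qed
  have daZ: "pdo_map da Z = (\<lambda>j n. \<Sum>i<m. Y i j n)" unfolding flow_a Y_def ..
  have daZw: "pwf (pdo_map da Z) z" unfolding daZ by (rule pwf_sum) (rule Yw)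
  have XZ: "pdo_mult X Z = (\<lambda>r n. - pdo_mult Zi (pdo_map da Z) r n)"
  proof (intro ext)
    fix r n
    have "da (pdo_mult Zi Z r n) = pdo_mult X Z r n + pdo_mult Zi (pdo_map da Z) r n"
      unfolding X_def by (rule da.leibniz[OF Zi Z])
    moreover have "da (pdo_mult Zi Z r n) = 0" by (simp add: Z_inv2 pdo_one_def)
    ultimately show "pdo_mult X Z r n = - pdo_mult Zi (pdo_map da Z) r n"
      by (simp add: eq_neg_iff_add_eq_0)
  qed
  have ZidaZw: "pwf (pdo_mult Zi (pdo_map da Z)) (zi + z)" by (rule pwf_mult[OF Zi daZw])
  have Xeq: "X = (\<lambda>r n. - pdo_mult Zi (pdo_mult (pdo_map da Z) Zi) r n)"
  proof -
    have "X = pdo_mult X (pdo_mult Z Zi)" by (simp add: Z_inv1 mult_one_right)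
    also have "\<dots> = pdo_mult (pdo_mult X Z) Zi" by (rule pdo_assoc[OF Xw Z Zi, symmetric])
    also have "\<dots> = (\<lambda>r n. - pdo_mult (pdo_mult Zi (pdo_map da Z)) Zi r n)"
      unfolding XZ by (rule mult_neg_left[OF ZidaZw Zi])
    also have "pdo_mult (pdo_mult Zi (pdo_map da Z)) Zi = pdo_mult Zi (pdo_mult (pdo_map da Z) Zi)"
      by (rule pdo_assoc[OF Zi daZw Zi])
    finally show ?thesis .
  qed
  define U where "U i = pdo_mult (pdo_fn (phi i)) (pdo_mult pdo_Dinv (pdo_mult (pdo_fn (shf 1 (psi i))) pdo_Delta))" for i
  have Uw: "pwf (U i) 0" for i
  proof -
    have "pwf (U i) (0 + (-1 + (0 + 1)))" unfolding U_def
      by (rule pwf_mult[OF pwf_fn pwf_mult[OF Dinvw pwf_mult[OF pwf_fn Dw]]])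
    then show ?thesis by simp
  qed
  have YZi: "pdo_mult (Y i) Zi = U i" for i
    by (simp add: Y_def U_def assoc_wf wZ wZi Z_inv1 mult_one_right)
  have daZZi: "pdo_mult (pdo_map da Z) Zi = (\<lambda>r n. \<Sum>i<m. U i r n)"
    unfolding daZ mult_sum_left[OF finite_lessThan Yw Zi] YZi ..
  have SUw: "pwf (\<lambda>r n. \<Sum>i<m. pdo_mult Zi (U i) r n) (zi + 0)"
    by (rule pwf_sum) (rule pwf_mult[OF Zi Uw])
  have Xeq2: "X = (\<lambda>r n. - (\<Sum>i<m. pdo_mult Zi (U i) r n))"
    unfolding Xeq daZZi mult_sum_right[OF finite_lessThan Zi Uw] ..
  define B where "B i = pdo_mult Zi (pdo_mult (pdo_fn (phi i)) pdo_Dinv)" for i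
  have Bw: "pwf (B i) (zi - 1)" for i
  proof -
    have "pwf (B i) (zi + (0 + -1))" unfolding B_def by (rule pwf_mult[OF Zi pwf_mult[OF pwf_fn Dinvw]])
    then show ?thesis by simp
  qed
  have ZUD: "pdo_mult (pdo_mult Zi (U i)) pdo_Dinv = pdo_mult (B i) (pdo_fn (shf 1 (psi i)))" for i
    by (simp add: U_def B_def assoc_wf wZi pdo_Delta_Dinv mult_one_right)
  have ZUw: "pwf (pdo_mult Zi (U i)) (zi + 0)" for i by (rule pwf_mult[OF Zi Uw])
  have XD: "pdo_mult X pdo_Dinv = (\<lambda>r n. - (\<Sum>i<m. pdo_mult (B i) (pdo_fn (shf 1 (psi i))) r n))"
  proof -
    have "pdo_mult X pdo_Dinv = (\<lambda>r n. - pdo_mult (\<lambda>r n. \<Sum>i<m. pdo_mult Zi (U i) r n) pdo_Dinv r n)"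
      unfolding Xeq2 by (rule mult_neg_left[OF SUw Dinvw])
    also have "pdo_mult (\<lambda>r n. \<Sum>i<m. pdo_mult Zi (U i) r n) pdo_Dinv = (\<lambda>r n. \<Sum>i<m. pdo_mult (pdo_mult Zi (U i)) pdo_Dinv r n)"
      by (rule mult_sum_left[OF finite_lessThan ZUw Dinvw])
    finally show ?thesis by (simp add: ZUD)
  qed
  have mapQ: "pdo_map da Q0 = shp (-1) (pdo_mult X pdo_Dinv)"
    by (intro ext) (simp add: Q0_def X_def shp_def pdo_map_def pdo_Dinv_E mult_E_right)
  define W where "W i = pdo_mult (shp (-1) (B i)) (pdo_fn (psi i))" for i
  have Ww: "pwf (W i) (zi - 1)" for i
    using pwf_mult[OF pwf_shp[OF Bw] pwf_fn] by (simp add: W_def)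
  have shW: "shp (-1) (pdo_mult (B i) (pdo_fn (shf 1 (psi i)))) = W i" for i
  proof -
    have "shp (-1) (pdo_fn (shf 1 (psi i))) = pdo_fn (psi i)" by (simp add: shp_fn shf_def)
    then show ?thesis by (simp add: W_def shp_mult[symmetric])
  qed
  define R where "R i n = adj_exp_apply (shp (-1) (B i)) n" for i n
  have daw: "fls_cmap da (wave_adj Zi n) = - (\<Sum>i<m. fls_const (psi i n) * R i n)"
  proof -
    have "fls_cmap da (wave_adj Zi n) = adj_exp_apply (pdo_map da Q0) n"
      unfolding wadj by (rule da.cmap_adj[OF Q0w])
    also have "pdo_map da Q0 = (\<lambda>r n. - (\<Sum>i<m. W i r n))"
      unfolding mapQ XD by (simp add: shp_def shW[symmetric])
    also have "adj_exp_apply (\<lambda>r n. - (\<Sum>i<m. W i r n)) n = - adj_exp_apply (\<lambda>r n. \<Sum>i<m. W i r n) n"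
      by (rule adj_neg[OF pwf_sum[OF Ww]])
    also have "adj_exp_apply (\<lambda>r n. \<Sum>i<m. W i r n) n = (\<Sum>i<m. adj_exp_apply (W i) n)"
      by (rule adj_sum[OF finite_lessThan Ww])
    also have "\<dots> = (\<Sum>i<m. fls_const (psi i n) * R i n)"
      by (rule sum.cong[OF refl]) (simp add: W_def R_def adj_fn[OF pwf_shp[OF Bw]])
    finally show ?thesis .
  qed
  have dw: "wave_adj Zi (n + 1) - wave_adj Zi n = - adj_exp_apply (shp (-1) Zi) (n + 1)" for n
  proof -
    have "pdo_mult Q0 pdo_Delta = shp (-1) Zi"
      unfolding Q0_def
      by (intro ext) (simp add: pdo_Delta_E mult_E_right shp_def pdo_Dinv_E)
    then show ?thesis using adj_Delta[OF Q0w, of "n + 1"] by (simp add: wadj)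
  qed
  have TR: "T i n = R i n" if i: "i < m" for i n
  proof -
    have sep: "is_sep dt (-1) L (\<lambda>n. fls_const (phi i n)) (fdiff 1 (wave_adj Zi)) (T i)" by (rule T_sep[OF i])
    have dT: "T i (n + 1) - T i n = fls_const (phi i n) * (wave_adj Zi (n + 1) - wave_adj Zi n)" for n
      using sep by (simp add: is_sep_def)
    have tT: "tder dt (-1) 1 (T i) = pdo_res (pdo_mult pdo_Gamma (pdo_mult pdo_Dinv (pdo_mult (pdo_fn (fdiff 1 (wave_adj Zi)))
          (pdo_mult (pdo_pos (pdo_pow (pdo_map fls_const L) 1)) (pdo_mult (pdo_fn (\<lambda>n. fls_const (phi i n))) pdo_Dinv)))))"
      using sep by (simp add: is_sep_def)
    have lbw: "lb (wave_adj Zi n) (n + (1 - zi))" for n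
      unfolding wadj by (rule lb_mono[OF lb_adj[OF Q0w]]) simp
    have lbG: "lb (fdiff 1 (wave_adj Zi) n) (n + (1 - zi))" for n
    proof -
      have "lb (wave_adj Zi (n + 1)) (n + (1 - zi))" by (rule lb_mono[OF lbw]) simp
      then show ?thesis using lb_diff[OF _ lbw] by simp
    qed
    have lbT: "lb (T i n) (n - 1 + ((1 - zi) - (z + (1 + zi) - 1)))" for n
    proof (rule tder_lb[of dt "-1"])
      show "dt 1 0 = 0" by (rule dt1.zero)
      show "lb (tder dt (-1) 1 (T i) n) (n - 1 + ((1 - zi) - (z + (1 + zi) - 1)))"
        unfolding tT by (rule lb_res_plus[OF Lw lbG])
    qed simp
    have lbR: "lb (R i n) (n - (zi - 1))" for n
      unfolding R_def by (rule lb_adj[OF pwf_shp[OF Bw]])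
    have dR: "R i (n + 1) - R i n = fls_const (phi i n) * (wave_adj Zi (n + 1) - wave_adj Zi n)" for n
    proof -
      have e1: "pdo_mult (shp (-1) (B i)) pdo_Delta = pdo_mult (shp (-1) Zi) (pdo_fn (\<lambda>n. phi i (n + -1)))"
      proof -
        have "pdo_mult (B i) pdo_Delta = pdo_mult Zi (pdo_fn (phi i))"
          by (simp add: B_def assoc_wf wZi pdo_Dinv_Delta mult_one_right)
        then have "pdo_mult (shp (-1) (B i)) (shp (-1) pdo_Delta) = pdo_mult (shp (-1) Zi) (shp (-1) (pdo_fn (phi i)))"
          by (simp add: shp_mult)
        then show ?thesis by (simp add: pdo_Delta_E shp_E shp_fn)
      qed
      have SBw: "pwf (shp (-1) (B i)) (zi - 1)" by (rule pwf_shp[OF Bw])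
      have "R i (n + 1) - R i n = - adj_exp_apply (pdo_mult (shp (-1) (B i)) pdo_Delta) (n + 1)"
        using adj_Delta[OF SBw, of "n + 1"] by (simp add: R_def)
      also have "\<dots> = - (fls_const (phi i n) * adj_exp_apply (shp (-1) Zi) (n + 1))"
        unfolding e1 by (simp add: adj_fn[OF pwf_shp[OF Zi]])
      also have "\<dots> = fls_const (phi i n) * (wave_adj Zi (n + 1) - wave_adj Zi n)"
        by (simp add: dw)
      finally show ?thesis .
    qed
    define C where "C n = T i n - R i n" for n
    have "C (n + 1) = C n" for n
    proof -
      have "C (n + 1) - C n = (T i (n + 1) - T i n) - (R i (n + 1) - R i n)"
        by (simp add: C_def algebra_simps)
      then show ?thesis by (simp add: dT dR)
    qed
    moreover have "lb (C n) (n + (- z - 2 * zi - 2))" for n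
      unfolding C_def
      by (rule lb_diff; rule lb_mono) (use lbT lbR z zi in auto)
    ultimately have "C n = 0" by (rule uniq_plus)
    then show ?thesis by (simp add: C_def)
  qed
  show ?thesis unfolding daw by (simp add: TR)
qed


theorem proposition4p1:
  fixes dt :: "nat \<Rightarrow> 'a::comm_ring_1 \<Rightarrow> 'a" and da :: "'a \<Rightarrow> 'a"
    and Z Zi L :: "'a pdo" and m :: nat
    and phi psi :: "nat \<Rightarrow> 'a fn"
    and S T :: "nat \<Rightarrow> 'a fls fn"
  assumes der_t: "\<And>k. k \<ge> 1 \<Longrightarrow> is_derivation (dt k)"
    and der_a: "is_derivation da"
    and Z_wf: "pdo_wf Z" and Z_ord: "\<And>j. j > 0 \<Longrightarrow> Z j = (\<lambda>n. 0)"
    and Zi_wf: "pdo_wf Zi"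
    and Z_inv: "pdo_mult Z Zi = pdo_one" "pdo_mult Zi Z = pdo_one"
    and L_def: "L = pdo_mult Z (pdo_mult pdo_Delta Zi)"
    and sato: "\<And>k. k \<ge> 1 \<Longrightarrow>
       pdo_map (dt k) Z = pdo_neg (pdo_mult (pdo_nonpos (pdo_pow L k)) Z)"
    and eig: "\<And>i. i < m \<Longrightarrow> is_eigenfunction dt L (phi i)"
    and adj_eig: "\<And>i. i < m \<Longrightarrow> is_adj_eigenfunction dt L (psi i)"
    and flow_a: "pdo_map da Z = (\<lambda>j n. \<Sum>i<m.
       pdo_mult (pdo_fn (phi i)) (pdo_mult pdo_Dinv
         (pdo_mult (pdo_fn (shf 1 (psi i))) (pdo_mult pdo_Delta Z))) j n)"
    and S_sep: "\<And>i. i < m \<Longrightarrow>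
       is_sep dt 1 L (wave Z) (\<lambda>n. fls_const (fdiff 1 (psi i) n)) (S i)"
    and T_sep: "\<And>i. i < m \<Longrightarrow>
       is_sep dt (-1) L (\<lambda>n. fls_const (phi i n)) (fdiff 1 (wave_adj Zi)) (T i)"
  shows "(\<forall>n. fls_cmap da (wave Z n) =
            (\<Sum>i<m. fls_const (phi i n) * (wave Z n * fls_const (psi i n) - S i n)))
       \<and> (\<forall>n. fls_cmap da (wave_adj Zi n) =
            - (\<Sum>i<m. fls_const (psi i n) * T i n))"
  proof -
  have Zw: "pwf Z 0" unfolding pwf_def using Z_ord by simp
  obtain zi0 where "pwf Zi zi0" using Zi_wf by (auto simp: pdo_wf_pwf)
  then have Ziw: "pwf Zi (max zi0 0)" by (rule pwf_mono) simp
  have zi: "0 \<le> max zi0 (0::int)" by simp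
  have dt1: "is_derivation (dt 1)" by (rule der_t) simp
  have c1: "\<forall>n. fls_cmap da (wave Z n) =
            (\<Sum>i<m. fls_const (phi i n) * (wave Z n * fls_const (psi i n) - S i n))"
    using concl1[OF dt1 der_a Zw Ziw zi L_def flow_a S_sep] by blast
  have c2: "\<forall>n. fls_cmap da (wave_adj Zi n) = - (\<Sum>i<m. fls_const (psi i n) * T i n)"
    using concl2[OF dt1 der_a Zw order_refl Ziw zi Z_inv(1) Z_inv(2) L_def flow_a T_sep] by blast
  show ?thesis using c1 c2 by blast
qed

end
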